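(* Let $K$ be a non-archimedean local field with normalized valuation $v$ and absolute value $|x|=q^{-v(x)}$, $q$ the cardinality of the residue field. Let $V$ be an $n$-dimensional $K$-vector space with basis $v_1,\dots,v_n$, $\underline n=\{1,\dots,n\}$, and let $N$ be the normalizer in $PGL(V)$ of the image $T$ of the diagonal matrices. Let $\overline{A}$, with its topology and $N$-action, and $\mathcal{S}_c$ and $\varphi$ be as in the context. Then the map $\varphi:\overline{A}\to\mathcal{S}_c$ is an $N$-equivariant homeomorphism.
   Context: A seminorm on $V$ is a map $\gamma:V\to\mathbb{R}_{\ge0}$, not identically zero, with $\gamma(\lambda x)=|\lambda|\gamma(x)$ and $\gamma(x+y)\le\max\{\gamma(x),\gamma(y)\}$. It is canonical with respect to a basis $w_1,\dots,w_n$ if $\gamma(\sum\lambda_iw_i)=\max_i|\lambda_i|\gamma(w_i)$. Two seminorms are equivalent if they differ by a positive real constant factor. $\mathcal{S}'_c$ is the set of seminorms canonical with respect to $v_1,\dots,v_n$, with the topology of pointwise convergence (coarsest topology making $\gamma\mapsto\gamma(x)$ continuous for each $x\in V$), and $\mathcal{S}_c$ is its quotient by equivalence, with the quotient topology. $N$ acts on $\mathcal{S}_c$ by $\gamma\mapsto\gamma\circ n^{-1}$. For each nonempty $I\subseteq\underline{n}$ let $A_I$ be the real vector space generated by $\overline{\eta}^I_i$ ($i\in I$) subject to $\sum_{i\in I}\overline{\eta}^I_i=0$; $A=A_{\underline n}$, $\eta_i=\overline\eta_i^{\underline n}$; $s_I:A\to A_I$ linear with $\eta_i\mapsto\overline{\eta}^I_i$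 for $i\in I$ and $\eta_i\mapsto0$ for $i\notin I$. $\overline{A}$ is the disjoint union of all $A_I$. $N=T\rtimes W$ with $W$ the permutation matrices ($w(v_i)=v_{w(i)}$); $t\in T$ induced by $\mathrm{diag}(d_1,\dots,d_n)$ acts on $A_I$ by translation by $\sum_{i\in I}-v(d_i)\overline{\eta}^I_i$, and $w\in W$ acts by the linear maps $A_I\to A_{w(I)}$, $\overline\eta^I_i\mapsto\overline\eta^{w(I)}_{w(i)}$. Topology on $\overline A$: for nonempty $I\subset\underline{n}$ (strict) let $\Delta_I=\sum_{i\notin I}\mathbb{R}_{\ge0}\eta_i$ and for $U\subset A$ open bounded let $\Gamma^I_U=(U+\Delta_I)\cup\bigcup_{I\subseteq J\subset\underline n,\,J\neq\underline n}s_J(U+\Delta_I)$; a base of the topology consists of the open subsets of $A$ and all $\Gamma^I_U$. The map $\varphi$: for $x=\sum_{i\in I}x_i\overline{\eta}^I_i\in A_I$, $\varphi(x)$ is the class of the seminorm $\gamma(\lambda_1v_1+\dots+\lambda_nv_n)=\max\{|\lambda_i|q^{-x_i}: i\in I\}$ (well defined and bijective $\overline A\to\mathcal S_c$). *)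

theory Defs
  imports "HOL-Analysis.Analysis"
begin

definition absv :: "('k::field \<Rightarrow> int) \<Rightarrow> nat \<Rightarrow> 'k \<Rightarrow> real" where
  "absv v q x = (if x = 0 then 0 else real q powr (- real_of_int (v x)))"

text \<open>K is a non-archimedean local field with normalized (surjective onto Z) discrete
  valuation v, complete for |.|, with finite residue field of cardinality q.\<close>
definition nonarch_local_field :: "('k::field \<Rightarrow> int) \<Rightarrow> nat \<Rightarrow> bool" where
  "nonarch_local_field v q \<longleftrightarrow>
     (\<forall>x y. x \<noteq> 0 \<longrightarrow> y \<noteq> 0 \<longrightarrow> v (x * y) = v x + v y) \<and>
     (\<forall>x y. x \<noteq> 0 \<longrightarrow> y \<noteq> 0 \<longrightarrow> x + y \<noteq> 0 \<longrightarrow> v (x + y) \<ge> min (v x) (v y)) \<and>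
     (\<forall>k. \<exists>x. x \<noteq> 0 \<and> v x = k) \<and>
     (let Ov = {x. x = 0 \<or> v x \<ge> 0};
          r = {(x, y). x \<in> Ov \<and> y \<in> Ov \<and> (x - y = 0 \<or> v (x - y) > 0)}
      in finite (Ov // r) \<and> card (Ov // r) = q) \<and>
     (\<forall>f :: nat \<Rightarrow> 'k.
        (\<forall>e>0. \<exists>N. \<forall>m\<ge>N. \<forall>n\<ge>N. absv v q (f m - f n) < e) \<longrightarrow>
        (\<exists>L. \<forall>e>0. \<exists>N. \<forall>n\<ge>N. absv v q (f n - L) < e))"

section \<open>Seminorms on V = K^n (coordinates w.r.t. the basis v_1..v_n)\<close>

definition basis_vec :: "'n \<Rightarrow> ('n \<Rightarrow> 'k::field)" where
  "basis_vec i = (\<lambda>j. if j = i then 1 else 0)"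

definition is_seminorm :: "('k::field \<Rightarrow> int) \<Rightarrow> nat \<Rightarrow> (('n \<Rightarrow> 'k) \<Rightarrow> real) \<Rightarrow> bool" where
  "is_seminorm v q \<gamma> \<longleftrightarrow>
     (\<forall>x. \<gamma> x \<ge> 0) \<and> (\<exists>x. \<gamma> x \<noteq> 0) \<and>
     (\<forall>c x. \<gamma> (\<lambda>i. c * x i) = absv v q c * \<gamma> x) \<and>
     (\<forall>x y. \<gamma> (\<lambda>i. x i + y i) \<le> max (\<gamma> x) (\<gamma> y))"

definition is_canonical :: "('k::field \<Rightarrow> int) \<Rightarrow> nat \<Rightarrow> (('n::finite \<Rightarrow> 'k) \<Rightarrow> real) \<Rightarrow> bool" where
  "is_canonical v q \<gamma> \<longleftrightarrow>
     (\<forall>x. \<gamma> x = Max ((\<lambda>i. absv v q (x i) * \<gamma> (basis_vec i)) ` UNIV))"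

definition Sc' :: "('k::field \<Rightarrow> int) \<Rightarrow> nat \<Rightarrow> (('n::finite \<Rightarrow> 'k) \<Rightarrow> real) set" where
  "Sc' v q = {\<gamma>. is_seminorm v q \<gamma> \<and> is_canonical v q \<gamma>}"

definition Sc'_top :: "('k::field \<Rightarrow> int) \<Rightarrow> nat \<Rightarrow> (('n::finite \<Rightarrow> 'k) \<Rightarrow> real) topology" where
  "Sc'_top v q = subtopology (product_topology (\<lambda>_. euclideanreal) UNIV) (Sc' v q)"

definition sclass :: "('k::field \<Rightarrow> int) \<Rightarrow> nat \<Rightarrow> (('n::finite \<Rightarrow> 'k) \<Rightarrow> real)
    \<Rightarrow> (('n \<Rightarrow> 'k) \<Rightarrow> real) set" where
  "sclass v q \<gamma> = {\<gamma>' \<in> Sc' v q. \<exists>r>0. \<gamma>' = (\<lambda>x. r * \<gamma> x)}"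

definition quotient_topology :: "'a topology \<Rightarrow> ('a \<Rightarrow> 'b) \<Rightarrow> 'b topology" where
  "quotient_topology X f =
     topology (\<lambda>U. U \<subseteq> f ` topspace X \<and> openin X {x \<in> topspace X. f x \<in> U})"

definition Sc_top :: "('k::field \<Rightarrow> int) \<Rightarrow> nat \<Rightarrow> ((('n::finite \<Rightarrow> 'k) \<Rightarrow> real) set) topology" where
  "Sc_top v q = quotient_topology (Sc'_top v q) (sclass v q)"

text \<open>An element \<Sum>_{i\<in>I} y_i \<eta>^I_i of A_I is represented by the normalized vector
  nrm I y (supported on I, coordinates summing to 0); Abar is the set of pairs (I, a)
  with I nonempty and a normalized; A = A_UNIV.\<close>
definition nrm :: "'n::finite set \<Rightarrow> real^'n \<Rightarrow> real^'n" where
  "nrm I y = (\<chi> i. if i \<in> I then y $ i - (\<Sum>j\<in>I. y $ j) / real (card I) else 0)"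

definition Aset :: "(real^'n::finite) set" where
  "Aset = {a. (\<Sum>i\<in>UNIV. a $ i) = 0}"

definition Abar :: "('n::finite set \<times> (real^'n)) set" where
  "Abar = {(I, a). I \<noteq> {} \<and> nrm I a = a}"

definition Delta :: "'n::finite set \<Rightarrow> (real^'n) set" where
  "Delta I = {t. \<forall>i. (i \<in> I \<longrightarrow> t $ i = 0) \<and> (i \<notin> I \<longrightarrow> t $ i \<ge> 0)}"

definition UDelta :: "(real^'n::finite) set \<Rightarrow> 'n set \<Rightarrow> (real^'n) set" where
  "UDelta U I = {nrm UNIV (u + t) | u t. u \<in> U \<and> t \<in> Delta I}"

definition sJ :: "'n::finite set \<Rightarrow> real^'n \<Rightarrow> ('n set \<times> (real^'n))" where
  "sJ J a = (J, nrm J a)"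

definition Gamma :: "'n::finite set \<Rightarrow> (real^'n) set \<Rightarrow> ('n set \<times> (real^'n)) set" where
  "Gamma I U = (\<lambda>a. (UNIV, a)) ` UDelta U I \<union>
     (\<Union>J\<in>{J. I \<subseteq> J \<and> J \<noteq> UNIV}. sJ J ` UDelta U I)"

definition Abar_base :: "('n::finite set \<times> (real^'n)) set set" where
  "Abar_base =
     {(\<lambda>a. (UNIV, a)) ` U | U. openin (top_of_set Aset) U} \<union>
     {Gamma I U | I U. I \<noteq> {} \<and> I \<noteq> UNIV \<and> openin (top_of_set Aset) U \<and> bounded U}"

definition Abar_top :: "('n::finite set \<times> (real^'n)) topology" where
  "Abar_top = topology_generated_by Abar_base"

definition phi :: "('k::field \<Rightarrow> int) \<Rightarrow> nat \<Rightarrow> ('n::finite set \<times> (real^'n))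
    \<Rightarrow> (('n \<Rightarrow> 'k) \<Rightarrow> real) set" where
  "phi v q p = (case p of (I, a) \<Rightarrow>
     sclass v q (\<lambda>x. Max ((\<lambda>i. absv v q (x i) * real q powr (- (a $ i))) ` I)))"

text \<open>An element of N is represented by the matrix diag(d_1..d_n) * w (d_i \<noteq> 0,
  w a permutation with w(v_i) = v_(w i)); it acts on V by
  (n x) j = d j * x (inv w j), so n^{-1} y = (\<lambda>i. y (w i) / d (w i)).\<close>
definition ninv :: "('n \<Rightarrow> 'k::field) \<Rightarrow> ('n \<Rightarrow> 'n) \<Rightarrow> ('n \<Rightarrow> 'k) \<Rightarrow> ('n \<Rightarrow> 'k)" where
  "ninv d w y = (\<lambda>i. y (w i) / d (w i))"

definition N_act_Sc :: "('n \<Rightarrow> 'k::field) \<Rightarrow> ('n \<Rightarrow> 'n)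
    \<Rightarrow> (('n \<Rightarrow> 'k) \<Rightarrow> real) set \<Rightarrow> (('n \<Rightarrow> 'k) \<Rightarrow> real) set" where
  "N_act_Sc d w C = (\<lambda>\<gamma>. \<gamma> \<circ> ninv d w) ` C"

definition T_act :: "('k::field \<Rightarrow> int) \<Rightarrow> ('n::finite \<Rightarrow> 'k)
    \<Rightarrow> ('n set \<times> (real^'n)) \<Rightarrow> ('n set \<times> (real^'n))" where
  "T_act v d p = (case p of (I, a) \<Rightarrow> (I, nrm I (\<chi> i. a $ i - real_of_int (v (d i)))))"

definition W_act :: "('n::finite \<Rightarrow> 'n) \<Rightarrow> ('n set \<times> (real^'n)) \<Rightarrow> ('n set \<times> (real^'n))" where
  "W_act w p = (case p of (I, a) \<Rightarrow> (w ` I, nrm (w ` I) (\<chi> j. a $ (inv w j))))"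

definition N_act_Abar :: "('k::field \<Rightarrow> int) \<Rightarrow> ('n::finite \<Rightarrow> 'k) \<Rightarrow> ('n \<Rightarrow> 'n)
    \<Rightarrow> ('n set \<times> (real^'n)) \<Rightarrow> ('n set \<times> (real^'n))" where
  "N_act_Abar v d w p = T_act v d (W_act w p)"

end

theory Submission
  imports Defs
begin


lemma nlf_mult: "nonarch_local_field v q \<Longrightarrow> x \<noteq> 0 \<Longrightarrow> y \<noteq> 0 \<Longrightarrow> v (x * y) = v x + v y"
  unfolding nonarch_local_field_def by blast

lemma nlf_add: "nonarch_local_field v q \<Longrightarrow> x \<noteq> 0 \<Longrightarrow> y \<noteq> 0 \<Longrightarrow> x + y \<noteq> 0 \<Longrightarrow> v (x + y) \<ge> min (v x) (v y)"
  unfolding nonarch_local_field_def by blast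

lemma nlf_v1: "nonarch_local_field v q \<Longrightarrow> v 1 = 0"
  using nlf_mult[of v q 1 1] by simp

lemma nlf_q: assumes "nonarch_local_field v q" shows "q \<ge> 2"
proof -
  define Ov where "Ov = {x. x = 0 \<or> v x \<ge> 0}"
  define r where "r = {(x, y). x \<in> Ov \<and> y \<in> Ov \<and> (x - y = 0 \<or> v (x - y) > 0)}"
  have fin: "finite (Ov // r)" and cq: "card (Ov // r) = q"
    using assms unfolding nonarch_local_field_def Let_def Ov_def r_def by auto
  have v1: "v 1 = 0" using nlf_v1[OF assms] .
  have in0: "0 \<in> Ov" and in1: "1 \<in> Ov" using v1 by (auto simp: Ov_def)
  have A: "r `` {0} \<in> Ov // r" using in0 by (auto simp: quotient_def)
  have B: "r `` {1} \<in> Ov // r" using in1 by (auto simp: quotient_def)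
  have "(0, 0) \<in> r" using in0 by (auto simp: r_def)
  moreover have "(1, 0) \<notin> r" using v1 by (auto simp: r_def)
  ultimately have "r `` {0} \<noteq> r `` {1}" by auto
  then have "card {r `` {0}, r `` {1}} = 2" by simp
  moreover have "card {r `` {0}, r `` {1}} \<le> card (Ov // r)"
    using A B fin by (intro card_mono) auto
  ultimately show ?thesis using cq by simp
qed

lemma absv_nonneg: "absv v q x \<ge> 0"
  by (simp add: absv_def)

lemma absv_0[simp]: "absv v q 0 = 0"
  by (simp add: absv_def)

lemma absv_pos: "q > 0 \<Longrightarrow> x \<noteq> 0 \<Longrightarrow> absv v q x > 0"
  by (simp add: absv_def)

lemma absv_1: "nonarch_local_field v q \<Longrightarrow> absv v q 1 = 1"
  using nlf_v1[of v q] nlf_q[of v q] by (simp add: absv_def)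

lemma absv_mult: assumes "nonarch_local_field v q"
  shows "absv v q (x * y) = absv v q x * absv v q y"
proof (cases "x = 0 \<or> y = 0")
  case True then show ?thesis by auto
next
  case False
  then show ?thesis using nlf_mult[OF assms, of x y] nlf_q[OF assms]
    by (simp add: absv_def powr_add[symmetric])
qed

lemma absv_div: assumes "nonarch_local_field v q" "d \<noteq> 0"
  shows "absv v q (x / d) = absv v q x * real q powr (real_of_int (v d))"
proof (cases "x = 0")
  case True then show ?thesis by simp
next
  case False
  have "v (x / d * d) = v (x / d) + v d" using nlf_mult[OF assms(1), of "x/d" d] False assms(2) by simp
  then have "v (x / d) = v x - v d" using assms(2) by simp
  then show ?thesis using False assms(2) nlf_q[OF assms(1)]
    by (simp add: absv_def powr_add[symmetric])
qed

lemma absv_ultra: assumes "nonarch_local_field v q"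
  shows "absv v q (x + y) \<le> max (absv v q x) (absv v q y)"
proof (cases "x = 0 \<or> y = 0 \<or> x + y = 0")
  case True then show ?thesis using absv_nonneg[of v q] by (auto simp: max_def)
next
  case False
  then have "v (x + y) \<ge> min (v x) (v y)" using nlf_add[OF assms] by blast
  moreover have "real q > 1" using nlf_q[OF assms] by simp
  ultimately show ?thesis using False
    by (auto simp: absv_def max_def min_def split: if_splits)
qed



definition avg :: "'n::finite set \<Rightarrow> real^'n \<Rightarrow> real" where
  "avg I y = (\<Sum>j\<in>I. y $ j) / real (card I)"

lemma nrm_nth: "nrm I y $ i = (if i \<in> I then y $ i - avg I y else 0)"
  by (simp add: nrm_def avg_def)

lemma nrm_shift:
  fixes I :: "'n::finite set"
  assumes "\<forall>i\<in>I. y $ i = z $ i + k"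
  shows "nrm I y = nrm I z"
proof (cases "I = {}")
  case True then show ?thesis by (simp add: nrm_def)
next
  case False
  then have cI: "real (card I) > 0" by (simp add: card_gt_0_iff)
  have "(\<Sum>j\<in>I. y $ j) = (\<Sum>j\<in>I. z $ j) + real (card I) * k"
    using assms by (simp add: sum.distrib)
  then have "avg I y = (\<Sum>j\<in>I. z $ j) / real (card I) + (real (card I) * k) / real (card I)"
    unfolding avg_def by (simp only: add_divide_distrib)
  also have "(real (card I) * k) / real (card I) = k" using cI by (intro nonzero_mult_div_cancel_left) linarith
  finally have "avg I y = avg I z + k" by (simp add: avg_def)
  then show ?thesis using assms by (simp add: vec_eq_iff nrm_nth)
qed

lemma nrm_eq_imp:
  fixes I :: "'n::finite set"
  assumes "nrm I y = nrm I z"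
  shows "\<forall>i\<in>I. y $ i = z $ i + (avg I y - avg I z)"
proof
  fix i assume "i \<in> I"
  then have "nrm I y $ i = nrm I z $ i" using assms by simp
  then show "y $ i = z $ i + (avg I y - avg I z)" using \<open>i\<in>I\<close> by (simp add: nrm_nth)
qed

lemma nrm_idem: "nrm I (nrm I y) = nrm I y"
  by (rule nrm_shift[where k = "- avg I y"]) (simp add: nrm_nth)

lemma nrm_UNIV_nrm: "nrm K (nrm UNIV y) = nrm K y"
  by (rule nrm_shift[where k = "- avg UNIV y"]) (simp add: nrm_nth)

lemma nrm_cong: "(\<forall>i\<in>I. y $ i = z $ i) \<Longrightarrow> nrm I y = nrm I z"
  using nrm_shift[of I y z 0] by simp

lemma sum_nrm: "(\<Sum>i\<in>UNIV. nrm I y $ i) = 0"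
proof (cases "I = {}")
  case True then show ?thesis by (simp add: nrm_def)
next
  case False
  then have cI: "real (card I) > 0" by (simp add: card_gt_0_iff)
  have "(\<Sum>i\<in>UNIV. nrm I y $ i) = (\<Sum>i\<in>I. y $ i - avg I y)"
    by (simp add: nrm_nth sum.If_cases)
  also have "\<dots> = 0" using cI by (simp add: sum_subtractf avg_def)
  finally show ?thesis .
qed

lemma nrm_in_Aset: "nrm I y \<in> Aset"
  by (simp add: Aset_def sum_nrm)

lemma Aset_nrm: "a \<in> Aset \<Longrightarrow> nrm UNIV a = a"
  by (simp add: Aset_def vec_eq_iff nrm_nth avg_def)

lemma Abar_iff: "(I, a) \<in> Abar \<longleftrightarrow> I \<noteq> {} \<and> nrm I a = a"
  by (simp add: Abar_def)

lemma nrm_outside: "i \<notin> I \<Longrightarrow> nrm I y $ i = 0"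
  by (simp add: nrm_nth)

lemma Max_scale:
  fixes f :: "'a \<Rightarrow> real"
  assumes "finite S" "S \<noteq> {}" "r \<ge> 0"
  shows "Max ((\<lambda>i. r * f i) ` S) = r * Max (f ` S)"
proof -
  obtain i0 where i0: "i0 \<in> S" "f i0 = Max (f ` S)"
    using Max_in[of "f ` S"] assms by (metis (no_types, lifting) finite_imageI imageE image_is_empty)
  show ?thesis
  proof (rule Max_eqI)
    show "finite ((\<lambda>i. r * f i) ` S)" using assms by simp
    show "r * Max (f ` S) \<in> (\<lambda>i. r * f i) ` S" using i0 by force
    fix y assume "y \<in> (\<lambda>i. r * f i) ` S"
    then obtain i where "i \<in> S" "y = r * f i" by auto
    then show "y \<le> r * Max (f ` S)" using assms by (auto intro!: mult_left_mono)
  qed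
qed

definition gam :: "('k::field \<Rightarrow> int) \<Rightarrow> nat \<Rightarrow> ('n::finite \<Rightarrow> real) \<Rightarrow> ('n \<Rightarrow> 'k) \<Rightarrow> real" where
  "gam v q c = (\<lambda>x. Max ((\<lambda>i. absv v q (x i) * c i) ` UNIV))"

definition coef :: "(('n::finite \<Rightarrow> 'k::field) \<Rightarrow> real) \<Rightarrow> 'n \<Rightarrow> real" where
  "coef \<gamma> = (\<lambda>i. \<gamma> (basis_vec i))"

definition Cset :: "('n::finite \<Rightarrow> real) set" where
  "Cset = {c. (\<forall>i. c i \<ge> 0) \<and> (\<exists>i. c i \<noteq> 0)}"

lemma gam_basis:
  assumes "nonarch_local_field v q" "\<forall>i. c i \<ge> 0"
  shows "gam v q c (basis_vec i) = c i"
  unfolding gam_def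
proof (rule Max_eqI)
  show "finite ((\<lambda>j. absv v q (basis_vec i j) * c j) ` UNIV)" by simp
  show "c i \<in> (\<lambda>j. absv v q (basis_vec i j) * c j) ` UNIV"
    using absv_1[OF assms(1)] by (auto simp: basis_vec_def image_iff intro!: exI[of _ i])
  fix y assume "y \<in> (\<lambda>j. absv v q (basis_vec i j) * c j) ` UNIV"
  then show "y \<le> c i" using absv_1[OF assms(1)] assms(2) by (auto simp: basis_vec_def)
qed

lemma gam_nonneg: "\<forall>i. c i \<ge> 0 \<Longrightarrow> gam v q c x \<ge> 0"
  unfolding gam_def
  by (rule order_trans[OF _ Max_ge[where x = "absv v q (x undefined) * c undefined"]])
     (auto simp: absv_nonneg)

lemma gam_scale: "r \<ge> 0 \<Longrightarrow> gam v q (\<lambda>i. r * c i) = (\<lambda>x. r * gam v q c x)"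
  unfolding gam_def
  using Max_scale[of UNIV r "\<lambda>i. absv v q (_ i) * c i"]
  by (auto simp: mult.left_commute)

lemma gam_in_Sc':
  assumes nlf: "nonarch_local_field v q" and c: "c \<in> Cset"
  shows "gam v q c \<in> Sc' v q"
proof -
  have c0: "\<forall>i. c i \<ge> 0" and "\<exists>i. c i \<noteq> 0" using c by (auto simp: Cset_def)
  then obtain i0 where "c i0 \<noteq> 0" by auto
  have nz: "\<exists>x. gam v q c x \<noteq> 0"
    using gam_basis[OF nlf c0, of i0] \<open>c i0 \<noteq> 0\<close> by (intro exI[of _ "basis_vec i0"]) simp
  have hom: "gam v q c (\<lambda>i. a * x i) = absv v q a * gam v q c x" for a x
  proof -
    have "gam v q c (\<lambda>i. a * x i) = Max ((\<lambda>i. absv v q a * (absv v q (x i) * c i)) ` UNIV)"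
      by (simp add: gam_def absv_mult[OF nlf] mult.assoc)
    also have "\<dots> = absv v q a * gam v q c x"
      by (subst Max_scale) (auto simp: absv_nonneg gam_def)
    finally show ?thesis .
  qed
  have ultra: "gam v q c (\<lambda>i. x i + y i) \<le> max (gam v q c x) (gam v q c y)" for x y
  proof -
    have "absv v q (x i + y i) * c i \<le> max (gam v q c x) (gam v q c y)" for i
    proof -
      have g1: "absv v q (x i) * c i \<le> gam v q c x" unfolding gam_def by (rule Max_ge) auto
      have g2: "absv v q (y i) * c i \<le> gam v q c y" unfolding gam_def by (rule Max_ge) auto
      have "absv v q (x i + y i) \<le> absv v q (x i) \<or> absv v q (x i + y i) \<le> absv v q (y i)"
        using absv_ultra[OF nlf, of "x i" "y i"] by linarith
      then show ?thesis
      proof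
        assume "absv v q (x i + y i) \<le> absv v q (x i)"
        then have "absv v q (x i + y i) * c i \<le> absv v q (x i) * c i"
          using c0 by (intro mult_right_mono) auto
        then show ?thesis using g1 by linarith
      next
        assume "absv v q (x i + y i) \<le> absv v q (y i)"
        then have "absv v q (x i + y i) * c i \<le> absv v q (y i) * c i"
          using c0 by (intro mult_right_mono) auto
        then show ?thesis using g2 by linarith
      qed
    qed
    then show ?thesis
      by (subst gam_def, subst Max_le_iff) auto
  qed
  have canon: "is_canonical v q (gam v q c)"
    unfolding is_canonical_def using gam_basis[OF nlf c0] by (simp add: gam_def)
  show ?thesis unfolding Sc'_def is_seminorm_def
    using nz hom ultra canon gam_nonneg[OF c0] by blast
qed

lemma Sc'_gam:
  assumes "\<gamma> \<in> Sc' v q"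
  shows "coef \<gamma> \<in> Cset" "\<gamma> = gam v q (coef \<gamma>)"
proof -
  have can: "\<And>x. \<gamma> x = Max ((\<lambda>i. absv v q (x i) * \<gamma> (basis_vec i)) ` UNIV)"
    using assms unfolding Sc'_def is_canonical_def by blast
  show eq: "\<gamma> = gam v q (coef \<gamma>)" unfolding gam_def coef_def by (rule ext) (rule can)
  have nn: "\<forall>i. coef \<gamma> i \<ge> 0" using assms by (simp add: Sc'_def is_seminorm_def coef_def)
  obtain x where "\<gamma> x \<noteq> 0" using assms by (auto simp: Sc'_def is_seminorm_def)
  have "\<exists>i. coef \<gamma> i \<noteq> 0"
  proof (rule ccontr)
    assume "\<not> ?thesis"
    then have "gam v q (coef \<gamma>) x = 0" by (simp add: gam_def)
    then show False using eq \<open>\<gamma> x \<noteq> 0\<close> by metis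
  qed
  then show "coef \<gamma> \<in> Cset" using nn by (simp add: Cset_def)
qed

lemma coef_gam: "nonarch_local_field v q \<Longrightarrow> c \<in> Cset \<Longrightarrow> coef (gam v q c) = c"
  using gam_basis by (auto simp: coef_def Cset_def fun_eq_iff)

lemma Cset_scale: "c \<in> Cset \<Longrightarrow> r > 0 \<Longrightarrow> (\<lambda>i. r * c i) \<in> Cset"
  by (auto simp: Cset_def)

lemma Sc'_scale:
  assumes "nonarch_local_field v q" "\<gamma> \<in> Sc' v q" "r > 0"
  shows "(\<lambda>x. r * \<gamma> x) \<in> Sc' v q"
proof -
  have "(\<lambda>x. r * \<gamma> x) = gam v q (\<lambda>i. r * coef \<gamma> i)"
    using gam_scale[of r v q "coef \<gamma>"] Sc'_gam(2)[OF assms(2)] assms(3) by (metis less_imp_le)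
  then show ?thesis using gam_in_Sc'[OF assms(1) Cset_scale[OF Sc'_gam(1)[OF assms(2)] assms(3)]]
    by simp
qed

lemma sclass_self: "\<gamma> \<in> Sc' v q \<Longrightarrow> \<gamma> \<in> sclass v q \<gamma>"
  unfolding sclass_def by (auto intro!: exI[of _ 1])

lemma sclass_scale:
  assumes "nonarch_local_field v q" "\<gamma> \<in> Sc' v q" "r > 0"
  shows "sclass v q (\<lambda>x. r * \<gamma> x) = sclass v q \<gamma>"
proof (intro set_eqI iffI)
  fix g assume "g \<in> sclass v q (\<lambda>x. r * \<gamma> x)"
  then obtain s where "s > 0" "g \<in> Sc' v q" "g = (\<lambda>x. s * (r * \<gamma> x))" by (auto simp: sclass_def)
  then show "g \<in> sclass v q \<gamma>" using assms(3) unfolding sclass_def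
    by (auto intro!: exI[of _ "s * r"] simp: mult.assoc)
next
  fix g assume "g \<in> sclass v q \<gamma>"
  then obtain s where "s > 0" "g \<in> Sc' v q" "g = (\<lambda>x. s * \<gamma> x)" by (auto simp: sclass_def)
  moreover have "g = (\<lambda>x. (s / r) * (r * \<gamma> x))" using \<open>g = (\<lambda>x. s * \<gamma> x)\<close> assms(3) by auto
  moreover have "s / r > 0" using \<open>s > 0\<close> assms(3) by simp
  ultimately show "g \<in> sclass v q (\<lambda>x. r * \<gamma> x)" unfolding sclass_def by blast
qed

lemma sclass_mem: "g \<in> sclass v q \<gamma> \<Longrightarrow> g \<in> Sc' v q \<and> (\<exists>r>0. g = (\<lambda>x. r * \<gamma> x))"
  by (simp add: sclass_def)



lemma continuous_on_Max_fin:
  fixes f :: "'i \<Rightarrow> 'a::topological_space \<Rightarrow> real"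
  assumes "finite S" "S \<noteq> {}" "\<And>i. i \<in> S \<Longrightarrow> continuous_on T (f i)"
  shows "continuous_on T (\<lambda>x. Max ((\<lambda>i. f i x) ` S))"
  using assms
proof (induction S rule: finite_ne_induct)
  case (singleton i) then show ?case by simp
next
  case (insert i F)
  have "(\<lambda>x. Max ((\<lambda>i. f i x) ` insert i F)) = (\<lambda>x. max (f i x) (Max ((\<lambda>i. f i x) ` F)))"
    using insert by (auto simp: Max_insert)
  then show ?case using insert by (auto intro!: continuous_on_max)
qed

lemma continuous_on_Min_fin:
  fixes f :: "'i \<Rightarrow> 'a::topological_space \<Rightarrow> real"
  assumes "finite S" "S \<noteq> {}" "\<And>i. i \<in> S \<Longrightarrow> continuous_on T (f i)"
  shows "continuous_on T (\<lambda>x. Min ((\<lambda>i. f i x) ` S))"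
  using assms
proof (induction S rule: finite_ne_induct)
  case (singleton i) then show ?case by simp
next
  case (insert i F)
  have "(\<lambda>x. Min ((\<lambda>i. f i x) ` insert i F)) = (\<lambda>x. min (f i x) (Min ((\<lambda>i. f i x) ` F)))"
    using insert by (auto simp: Min_insert)
  then show ?case using insert by (auto intro!: continuous_on_min)
qed

lemma istopology_quotient:
  "istopology (\<lambda>U. U \<subseteq> f ` topspace X \<and> openin X {x \<in> topspace X. f x \<in> U})"
proof -
  have 1: "openin X {x \<in> topspace X. f x \<in> S \<inter> T}"
    if "openin X {x \<in> topspace X. f x \<in> S}" "openin X {x \<in> topspace X. f x \<in> T}" for S T
  proof -
    have "{x \<in> topspace X. f x \<in> S \<inter> T} = {x \<in> topspace X. f x \<in> S} \<inter> {x \<in> topspace X. f x \<in> T}"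
      by auto
    then show ?thesis using that by auto
  qed
  have 2: "openin X {x \<in> topspace X. f x \<in> \<Union>K}"
    if "\<forall>U\<in>K. openin X {x \<in> topspace X. f x \<in> U}" for K
  proof -
    have "{x \<in> topspace X. f x \<in> \<Union>K} = (\<Union>U\<in>K. {x \<in> topspace X. f x \<in> U})" by auto
    then show ?thesis using that by auto
  qed
  show ?thesis unfolding istopology_def using 1 2 by blast
qed

lemma openin_quotient:
  "openin (quotient_topology X f) U \<longleftrightarrow> U \<subseteq> f ` topspace X \<and> openin X {x \<in> topspace X. f x \<in> U}"
  unfolding quotient_topology_def using istopology_quotient[of f X] by (simp add: topology_inverse')

lemma topspace_quotient: "topspace (quotient_topology X f) = f ` topspace X"
proof -
  have "{x \<in> topspace X. f x \<in> f ` topspace X} = topspace X" by auto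
  then have "openin (quotient_topology X f) (f ` topspace X)"
    by (simp add: openin_quotient)
  then have "f ` topspace X \<subseteq> topspace (quotient_topology X f)" by (rule openin_subset)
  moreover have "topspace (quotient_topology X f) \<subseteq> f ` topspace X"
    using openin_quotient[of X f "topspace (quotient_topology X f)"] by simp
  ultimately show ?thesis by blast
qed

lemma continuous_map_quotient: "continuous_map X (quotient_topology X f) f"
  unfolding continuous_map_def topspace_quotient
proof (intro conjI allI impI)
  show "f \<in> topspace X \<rightarrow> f ` topspace X" by auto
  fix U assume "openin (quotient_topology X f) U"
  then show "openin X {x \<in> topspace X. f x \<in> U}" by (simp add: openin_quotient)
qed

lemma continuous_map_from_quotient:
  assumes "continuous_map X Y (g \<circ> f)"
  shows "continuous_map (quotient_topology X f) Y g"
  unfolding continuous_map_def topspace_quotient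
proof (intro conjI allI impI)
  show "g \<in> f ` topspace X \<rightarrow> topspace Y" using assms by (auto simp: continuous_map_def)
  fix V assume V: "openin Y V"
  have "{x \<in> topspace X. f x \<in> {y \<in> f ` topspace X. g y \<in> V}} = {x \<in> topspace X. (g \<circ> f) x \<in> V}"
    by auto
  then show "openin (quotient_topology X f) {y \<in> f ` topspace X. g y \<in> V}"
    using assms V by (simp add: openin_quotient continuous_map_def)
qed

lemma topspace_Sc'_top: "topspace (Sc'_top v q) = Sc' v q"
  by (simp add: Sc'_top_def)

lemma topspace_Sc_top: "topspace (Sc_top v q) = sclass v q ` Sc' v q"
  by (simp add: Sc_top_def topspace_quotient topspace_Sc'_top)

lemma continuous_map_coef:
  "continuous_map (Sc'_top v q) (top_of_set (Cset :: ('n::finite \<Rightarrow> real) set)) coef"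
proof -
  have "continuous_map (Sc'_top v q) (product_topology (\<lambda>_. euclideanreal) UNIV) (coef :: _ \<Rightarrow> 'n \<Rightarrow> real)"
    unfolding continuous_map_componentwise_UNIV coef_def Sc'_top_def
    by (auto intro: continuous_map_from_subtopology continuous_map_product_projection)
  then show ?thesis
    by (auto simp: continuous_map_in_subtopology euclidean_product_topology topspace_Sc'_top
        intro: Sc'_gam(1))
qed

lemma continuous_map_gam:
  fixes v :: "'k::field \<Rightarrow> int"
  assumes "nonarch_local_field v q"
  shows "continuous_map (top_of_set (Cset :: ('n::finite \<Rightarrow> real) set)) (Sc'_top v q) (gam v q)"
proof -
  have "continuous_on Cset (\<lambda>c :: 'n \<Rightarrow> real. gam v q c x)" for x :: "'n \<Rightarrow> 'k"
    unfolding gam_def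
    by (intro continuous_on_Max_fin continuous_intros continuous_on_subset[OF continuous_on_product_coordinates]) auto
  then have "continuous_map (top_of_set (Cset :: ('n::finite \<Rightarrow> real) set)) (product_topology (\<lambda>_. euclideanreal) UNIV) (gam v q)"
    unfolding continuous_map_componentwise_UNIV by auto
  then show ?thesis unfolding Sc'_top_def
    using gam_in_Sc'[OF assms] by (auto simp: continuous_map_in_subtopology)
qed



definition ncf :: "nat \<Rightarrow> ('n::finite set \<times> (real^'n)) \<Rightarrow> 'n \<Rightarrow> real" where
  "ncf q p = (case p of (I, a) \<Rightarrow>
     (\<lambda>i. if i \<in> I then real q powr (Min ((\<lambda>j. a $ j) ` I) - a $ i) else 0))"

definition supp :: "('n::finite \<Rightarrow> real) \<Rightarrow> 'n set" where
  "supp c = {i. c i \<noteq> 0}"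

definition lg :: "nat \<Rightarrow> ('n::finite \<Rightarrow> real) \<Rightarrow> ('n set \<times> (real^'n))" where
  "lg q c = (supp c, nrm (supp c) (\<chi> i. - log (real q) (c i)))"

lemma Max_UNIV_if:
  fixes f :: "'n::finite \<Rightarrow> real"
  assumes "I \<noteq> {}" "\<And>i. f i \<ge> 0"
  shows "Max ((\<lambda>i. if i \<in> I then f i else 0) ` UNIV) = Max (f ` I)"
proof -
  obtain i0 where i0: "i0 \<in> I" "f i0 = Max (f ` I)"
    using Max_in[of "f ` I"] assms(1) finite[of I] by (metis (no_types, lifting) finite_imageI imageE image_is_empty)
  show ?thesis
  proof (rule Max_eqI)
    show "finite ((\<lambda>i. if i \<in> I then f i else 0) ` UNIV)" by simp
    fix y assume "y \<in> (\<lambda>i. if i \<in> I then f i else 0) ` UNIV"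
    then obtain i where "y = (if i \<in> I then f i else 0)" by blast
    then show "y \<le> Max (f ` I)"
      using i0 assms(2)[of i0] by (auto intro!: Max_ge simp: finite_subset)
  next
    show "Max (f ` I) \<in> (\<lambda>i. if i \<in> I then f i else 0) ` UNIV"
      using i0 by (auto simp: image_iff intro!: bexI[of _ i0])
  qed
qed

lemma Min_shift:
  fixes a :: "'n \<Rightarrow> real"
  assumes "finite I" "I \<noteq> {}"
  shows "Min ((\<lambda>j. a j + k) ` I) = Min (a ` I) + k"
proof -
  have "(\<lambda>j. a j + k) ` I = (\<lambda>x. x + k) ` (a ` I)" by auto
  moreover have "Min ((\<lambda>x. x + k) ` (a ` I)) = Min (a ` I) + k"
    using assms by (intro mono_Min_commute[symmetric]) (auto simp: mono_def)
  ultimately show ?thesis by simp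
qed

lemma q_gt1: "nonarch_local_field v q \<Longrightarrow> real q > 1"
  using nlf_q[of v q] by simp

lemma phi_eq:
  fixes v :: "'k::field \<Rightarrow> int"
  assumes nlf: "nonarch_local_field v q" and p: "(p :: 'n::finite set \<times> (real^'n)) \<in> Abar"
  shows "phi v q p = sclass v q (gam v q (ncf q p))"
proof -
  obtain I a where pI: "p = (I, a)" by (cases p)
  have I: "I \<noteq> {}" using p pI by (simp add: Abar_iff)
  have Q: "real q > 1" using q_gt1[OF nlf] .
  define m where "m = Min ((\<lambda>j. a $ j) ` I)"
  define cf where "cf = (\<lambda>i. if i \<in> I then real q powr (- a $ i) else 0)"
  have cfC: "cf \<in> Cset"
    using I Q by (auto simp: Cset_def cf_def)
  have g0: "(\<lambda>x. Max ((\<lambda>i. absv v q (x i) * real q powr (- (a $ i))) ` I)) = gam v q cf"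
  proof
    fix x :: "'n \<Rightarrow> 'k"
    show "Max ((\<lambda>i. absv v q (x i) * real q powr (- (a $ i))) ` I) = gam v q cf x"
      unfolding gam_def cf_def
      using Max_UNIV_if[OF I, of "\<lambda>i. absv v q (x i) * real q powr (- (a $ i))"]
      by (simp add: absv_nonneg if_distrib cong: if_cong)
  qed
  have ncf_eq: "ncf q p = (\<lambda>i. real q powr m * cf i)"
    using Q by (auto simp: ncf_def pI cf_def m_def fun_eq_iff powr_add[symmetric])
  have "phi v q p = sclass v q (gam v q cf)" by (simp add: phi_def pI g0)
  also have "\<dots> = sclass v q (\<lambda>x. real q powr m * gam v q cf x)"
    using Q by (intro sclass_scale[symmetric] nlf gam_in_Sc' cfC) auto
  also have "\<dots> = sclass v q (gam v q (ncf q p))"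
    using Q by (simp add: ncf_eq gam_scale)
  finally show ?thesis .
qed

lemma ncf_Cset:
  assumes "p \<in> Abar" "q > 1"
  shows "ncf q p \<in> Cset"
proof -
  obtain I a where pI: "p = (I, a)" by (cases p)
  have I: "I \<noteq> {}" using assms pI by (simp add: Abar_iff)
  then show ?thesis using assms(2) by (auto simp: Cset_def ncf_def pI)
qed

lemma supp_ncf: "q > 1 \<Longrightarrow> supp (ncf q (I, a)) = I"
  by (auto simp: supp_def ncf_def)

lemma lg_ncf:
  assumes "p \<in> Abar" "q > 1"
  shows "lg q (ncf q p) = p"
proof -
  obtain I a where pI: "p = (I, a)" by (cases p)
  have I: "I \<noteq> {}" and a: "nrm I a = a" using assms pI by (auto simp: Abar_iff)
  define m where "m = Min ((\<lambda>j. a $ j) ` I)"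
  have "nrm I (\<chi> i. - log (real q) (ncf q p i)) = nrm I a"
    using assms(2) by (intro nrm_shift[where k = "- m"]) (auto simp: ncf_def pI m_def)
  moreover have "supp (ncf q p) = I" using supp_ncf[OF assms(2)] pI by simp
  ultimately show ?thesis using a by (simp add: lg_def pI)
qed

lemma supp_scale: "r \<noteq> 0 \<Longrightarrow> supp (\<lambda>i. r * c i) = supp c"
  by (auto simp: supp_def)

lemma lg_scale:
  assumes "c \<in> Cset" "r > 0" "q > 1"
  shows "lg q (\<lambda>i. r * c i) = lg q c"
proof -
  have "nrm (supp c) (\<chi> i. - log (real q) (r * c i)) = nrm (supp c) (\<chi> i. - log (real q) (c i))"
    using assms by (intro nrm_shift[where k = "- log (real q) r"])
      (auto simp: supp_def Cset_def log_mult less_le)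
  then show ?thesis using assms by (simp add: lg_def supp_scale)
qed

lemma supp_ne: "c \<in> Cset \<Longrightarrow> supp c \<noteq> {}"
  by (auto simp: supp_def Cset_def)

lemma lg_Abar: "c \<in> Cset \<Longrightarrow> lg q c \<in> Abar"
  by (simp add: lg_def Abar_iff supp_ne nrm_idem)

lemma ncf_lg:
  assumes "c \<in> Cset" "q > 1"
  shows "\<exists>r>0. ncf q (lg q c) = (\<lambda>i. r * c i)"
proof -
  define K where "K = supp c"
  define b where "b = nrm K (\<chi> i. - log (real q) (c i))"
  have K: "K \<noteq> {}" using supp_ne[OF assms(1)] by (simp add: K_def)
  define m where "m = Min ((\<lambda>j. b $ j) ` K)"
  define s where "s = avg K (\<chi> i. - log (real q) (c i))"
  have cpos: "i \<in> K \<Longrightarrow> c i > 0" for i using assms(1) by (auto simp: K_def supp_def Cset_def less_le)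
  have "ncf q (lg q c) = (\<lambda>i. real q powr (m + s) * c i)"
  proof
    fix i
    show "ncf q (lg q c) i = real q powr (m + s) * c i"
    proof (cases "i \<in> K")
      case True
      have "ncf q (lg q c) i = real q powr (m - b $ i)"
        using True by (simp add: ncf_def lg_def K_def[symmetric] b_def[symmetric] m_def)
      also have "b $ i = - log (real q) (c i) - s" using True by (simp add: b_def nrm_nth s_def)
      also have "m - (- log (real q) (c i) - s) = (m + s) + log (real q) (c i)" by simp
      also have "real q powr ((m + s) + log (real q) (c i)) = real q powr (m + s) * real q powr (log (real q) (c i))"
        by (rule powr_add)
      also have "real q powr (log (real q) (c i)) = c i" using cpos[OF True] assms(2) by simp
      finally show ?thesis .
    next
      case False
      then have "c i = 0" by (simp add: K_def supp_def)
      then show ?thesis using False by (simp add: ncf_def lg_def K_def[symmetric])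
    qed
  qed
  then show ?thesis by (intro exI[of _ "real q powr (m + s)"]) (use assms in auto)
qed

definition psi :: "('k::field \<Rightarrow> int) \<Rightarrow> nat \<Rightarrow> (('n::finite \<Rightarrow> 'k) \<Rightarrow> real) set \<Rightarrow> ('n set \<times> (real^'n))" where
  "psi v q X = lg q (coef (SOME \<gamma>. \<gamma> \<in> X))"

lemma coef_scale: "coef (\<lambda>x. r * \<gamma> x) = (\<lambda>i. r * coef \<gamma> i)"
  by (simp add: coef_def)

lemma psi_sclass:
  assumes nlf: "nonarch_local_field v q" and g: "\<gamma> \<in> Sc' v q"
  shows "psi v q (sclass v q \<gamma>) = lg q (coef \<gamma>)"
proof -
  have "\<exists>g. g \<in> sclass v q \<gamma>" using sclass_self[OF g] by blast
  then have "(SOME g. g \<in> sclass v q \<gamma>) \<in> sclass v q \<gamma>" by (rule someI_ex)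
  then obtain r where r: "r > 0" "(SOME g. g \<in> sclass v q \<gamma>) = (\<lambda>x. r * \<gamma> x)"
    using sclass_mem by blast
  show ?thesis unfolding psi_def r(2) coef_scale
    using lg_scale[OF Sc'_gam(1)[OF g] r(1)] q_gt1[OF nlf] by simp
qed

lemma psi_phi:
  fixes v :: "'k::field \<Rightarrow> int"
  assumes nlf: "nonarch_local_field v q" and p: "(p :: 'n::finite set \<times> (real^'n)) \<in> Abar"
  shows "psi v q (phi v q p) = p"
proof -
  have Q: "q > 1" using q_gt1[OF nlf] by simp
  have C: "ncf q p \<in> Cset" using ncf_Cset[OF p Q] .
  have "psi v q (phi v q p) = lg q (coef (gam v q (ncf q p)))"
    using phi_eq[OF nlf p] psi_sclass[OF nlf gam_in_Sc'[OF nlf C]] by simp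
  also have "\<dots> = p" using coef_gam[OF nlf C] lg_ncf[OF p Q] by simp
  finally show ?thesis .
qed

lemma phi_lg:
  fixes v :: "'k::field \<Rightarrow> int"
  assumes nlf: "nonarch_local_field v q" and c: "(c :: 'n::finite \<Rightarrow> real) \<in> Cset"
  shows "phi v q (lg q c) = sclass v q (gam v q c)"
proof -
  have Q: "q > 1" using q_gt1[OF nlf] by simp
  obtain r where r: "r > 0" "ncf q (lg q c) = (\<lambda>i. r * c i)" using ncf_lg[OF c Q] by blast
  have "phi v q (lg q c) = sclass v q (gam v q (\<lambda>i. r * c i))"
    using phi_eq[OF nlf lg_Abar[OF c]] r(2) by simp
  also have "\<dots> = sclass v q (gam v q c)"
    using r(1) gam_scale[of r v q c] sclass_scale[OF nlf gam_in_Sc'[OF nlf c] r(1)] by simp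
  finally show ?thesis .
qed

lemma phi_psi:
  fixes v :: "'k::field \<Rightarrow> int"
  assumes nlf: "nonarch_local_field v q" and g: "(\<gamma> :: ('n::finite \<Rightarrow> 'k) \<Rightarrow> real) \<in> Sc' v q"
  shows "phi v q (psi v q (sclass v q \<gamma>)) = sclass v q \<gamma>"
proof -
  have "phi v q (psi v q (sclass v q \<gamma>)) = sclass v q (gam v q (coef \<gamma>))"
    using psi_sclass[OF nlf g] phi_lg[OF nlf Sc'_gam(1)[OF g]] by simp
  also have "\<dots> = sclass v q \<gamma>" using Sc'_gam(2)[OF g] by metis
  finally show ?thesis .
qed



lemma open_fin_all:
  assumes "finite S" "\<And>i. i \<in> S \<Longrightarrow> open {x. P i x}"
  shows "open {x. \<forall>i\<in>S. P i x}"
proof -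
  have "{x. \<forall>i\<in>S. P i x} = (\<Inter>i\<in>S. {x. P i x})" by auto
  then show ?thesis using assms by auto
qed

lemma open_abs_less:
  fixes f :: "'a::topological_space \<Rightarrow> real"
  assumes "continuous_on UNIV f"
  shows "open {x. \<bar>f x - c\<bar> < e}"
  using assms by (intro open_Collect_less continuous_intros)

definition hJ :: "nat \<Rightarrow> 'n::finite set \<Rightarrow> real^'n \<Rightarrow> 'n \<Rightarrow> real" where
  "hJ q J u j = real q powr (Min ((\<lambda>k. u $ k) ` J) - u $ j)"

lemma cont_hJ:
  assumes "J \<noteq> {}" "q > 1"
  shows "continuous_on UNIV (\<lambda>u. hJ q J u j)"
  unfolding hJ_def using assms
  by (intro continuous_intros continuous_on_Min_fin) auto

lemma ncf_UNIV: "ncf q (UNIV, b) i = hJ q UNIV b i"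
  by (simp add: ncf_def hJ_def)

lemma ncf_hJ: "ncf q (J, b) i = (if i \<in> J then hJ q J b i else 0)"
  by (simp add: ncf_def hJ_def)

lemma ncf_nrm:
  assumes "K \<noteq> {}"
  shows "ncf q (K, nrm K y) = ncf q (K, y)"
proof
  fix i
  have "Min ((\<lambda>j. nrm K y $ j) ` K) = Min ((\<lambda>j. y $ j + (- avg K y)) ` K)"
    by (intro arg_cong[where f = Min] image_cong) (auto simp: nrm_nth)
  also have "\<dots> = Min ((\<lambda>j. y $ j) ` K) + (- avg K y)"
    using assms by (intro Min_shift) auto
  finally show "ncf q (K, nrm K y) i = ncf q (K, y) i"
    by (simp add: ncf_def nrm_nth)
qed

lemma topspace_Abar_top: "topspace (Abar_top :: ('n::finite set \<times> (real^'n)) topology) = Abar"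
proof -
  have sub: "B \<subseteq> Abar" if B: "B \<in> (Abar_base :: ('n set \<times> (real^'n)) set set)" for B
  proof -
    consider (A) U where "B = (\<lambda>a. (UNIV, a)) ` U" "openin (top_of_set Aset) U"
      | (G) I U where "B = Gamma I U" "I \<noteq> {}"
      using B unfolding Abar_base_def by blast
    then show ?thesis
    proof cases
      case A
      then have "U \<subseteq> Aset" by (meson openin_imp_subset)
      then show ?thesis using A by (auto simp: Abar_iff Aset_nrm)
    next
      case G
      show ?thesis
      proof
        fix p assume "p \<in> B"
        then have "(\<exists>x\<in>UDelta U I. p = (UNIV, x)) \<or> (\<exists>J x. I \<subseteq> J \<and> x \<in> UDelta U I \<and> p = sJ J x)"
          unfolding G(1) Gamma_def by blast
        then show "p \<in> Abar"
        proof
          assume "\<exists>x\<in>UDelta U I. p = (UNIV, x)"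
          then obtain x where "x \<in> UDelta U I" "p = (UNIV, x)" by blast
          then obtain y where "x = nrm UNIV y" "p = (UNIV, x)" unfolding UDelta_def by blast
          then show ?thesis by (simp add: Abar_iff nrm_idem)
        next
          assume "\<exists>J x. I \<subseteq> J \<and> x \<in> UDelta U I \<and> p = sJ J x"
          then obtain J x where "I \<subseteq> J" "p = sJ J x" by blast
          then show ?thesis using G(2) by (auto simp: sJ_def Abar_iff nrm_idem)
        qed
      qed
    qed
  qed
  have sup: "p \<in> \<Union>(Abar_base :: ('n set \<times> (real^'n)) set set)" if p: "p \<in> Abar" for p
  proof -
    obtain I a where pI: "p = (I, a)" by (cases p)
    have I: "I \<noteq> {}" and a: "nrm I a = a" using p pI by (auto simp: Abar_iff)
    have aA: "a \<in> Aset" using a nrm_in_Aset[of I a] by simp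
    show ?thesis
    proof (cases "I = UNIV")
      case True
      have "p \<in> (\<lambda>a. (UNIV, a)) ` Aset" using pI True aA by auto
      moreover have "openin (top_of_set Aset) Aset" by simp
      then have "(\<lambda>a. (UNIV, a)) ` Aset \<in> Abar_base"
        unfolding Abar_base_def by blast
      ultimately show ?thesis by blast
    next
      case False
      define U where "U = Aset \<inter> ball a 1"
      have U: "openin (top_of_set Aset) U" "bounded U" by (auto simp: U_def openin_open_Int)
      have "a = nrm UNIV (a + 0)" "a \<in> U" "(0::real^'n) \<in> Delta I"
        using Aset_nrm[OF aA] aA by (auto simp: U_def Delta_def)
      then have "a \<in> UDelta U I"
        unfolding UDelta_def by blast
      then have "sJ I a \<in> Gamma I U" using False unfolding Gamma_def by blast
      moreover have "sJ I a = p" using a pI by (simp add: sJ_def)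
      moreover have "Gamma I U \<in> Abar_base" using U I False unfolding Abar_base_def by (intro UnI2 CollectI exI[of _ I] exI[of _ U]) simp
      ultimately show ?thesis by blast
    qed
  qed
  show ?thesis unfolding Abar_top_def topology_generated_by_topspace using sub sup by blast
qed



lemma cont_real_local:
  assumes "\<And>x e. x \<in> topspace X \<Longrightarrow> e > 0 \<Longrightarrow> \<exists>T. openin X T \<and> x \<in> T \<and> (\<forall>y\<in>T. \<bar>f y - f x\<bar> < e)"
  shows "continuous_map X euclideanreal f"
  unfolding continuous_map_def
proof (intro conjI allI impI)
  show "f \<in> topspace X \<rightarrow> topspace euclideanreal" by simp
  fix V :: "real set" assume "openin euclideanreal V"
  then have V: "open V" by simp
  show "openin X {x \<in> topspace X. f x \<in> V}"
  proof (rule iffD2[OF openin_subopen], rule ballI)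
    fix x assume x: "x \<in> {x \<in> topspace X. f x \<in> V}"
    then obtain e where e: "e > 0" "ball (f x) e \<subseteq> V" using V openE by blast
    obtain T where T: "openin X T" "x \<in> T" "\<forall>y\<in>T. \<bar>f y - f x\<bar> < e"
      using assms[of x e] x e by auto
    have "T \<subseteq> {x \<in> topspace X. f x \<in> V}"
    proof
      fix y assume "y \<in> T"
      then have "\<bar>f y - f x\<bar> < e" using T(3) by blast
      then have "f y \<in> ball (f x) e" by (simp add: dist_real_def abs_minus_commute)
      then show "y \<in> {x \<in> topspace X. f x \<in> V}" using e(2) openin_subset[OF T(1)] \<open>y \<in> T\<close> by auto
    qed
    then show "\<exists>T. openin X T \<and> x \<in> T \<and> T \<subseteq> {x \<in> topspace X. f x \<in> V}" using T by blast
  qed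
qed

lemma Abar_base_open: "B \<in> Abar_base \<Longrightarrow> openin Abar_top B"
  unfolding Abar_top_def by (rule topology_generated_by_Basis)

lemma Gamma_cases:
  assumes "p \<in> Gamma J U" "J \<noteq> {}"
  obtains K u t where "J \<subseteq> K" "u \<in> U" "t \<in> Delta J" "p = (K, nrm K (u + t))"
proof -
  have "(\<exists>x\<in>UDelta U J. p = (UNIV, x)) \<or> (\<exists>K x. J \<subseteq> K \<and> x \<in> UDelta U J \<and> p = sJ K x)"
    using assms(1) unfolding Gamma_def by blast
  then show ?thesis
  proof
    assume "\<exists>x\<in>UDelta U J. p = (UNIV, x)"
    then obtain u t where "u \<in> U" "t \<in> Delta J" "p = (UNIV, nrm UNIV (u + t))"
      unfolding UDelta_def by blast
    then show ?thesis using that[of UNIV u t] by simp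
  next
    assume "\<exists>K x. J \<subseteq> K \<and> x \<in> UDelta U J \<and> p = sJ K x"
    then obtain K u t where "J \<subseteq> K" "u \<in> U" "t \<in> Delta J" "p = sJ K (nrm UNIV (u + t))"
      unfolding UDelta_def by blast
    then show ?thesis using that[of K u t] by (simp add: sJ_def nrm_UNIV_nrm)
  qed
qed

lemma open_powr_less:
  assumes "q > 1"
  shows "open {u :: real^'n::finite. real q powr (u $ j - u $ i) < e}"
  using assms by (intro open_Collect_less continuous_intros) auto

lemma ncf_local:
  assumes Q: "q > 1" and p: "(p :: 'n::finite set \<times> (real^'n)) \<in> Abar" and e: "e > 0"
  shows "\<exists>T. openin Abar_top T \<and> p \<in> T \<and> (\<forall>p'\<in>T. \<forall>i. \<bar>ncf q p' i - ncf q p i\<bar> < e)"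
proof -
  obtain J b where pJ: "p = (J, b)" by (cases p)
  have J: "J \<noteq> {}" and b: "nrm J b = b" using p pJ by (auto simp: Abar_iff)
  have bA: "b \<in> Aset" using b nrm_in_Aset[of J b] by simp
  show ?thesis
  proof (cases "J = UNIV")
    case True
    define Ob where "Ob = {u. \<forall>i\<in>UNIV. \<bar>hJ q UNIV u i - hJ q UNIV b i\<bar> < e}"
    have "open Ob" unfolding Ob_def
      using Q by (intro open_fin_all open_abs_less cont_hJ) auto
    define U where "U = Aset \<inter> Ob"
    have U: "openin (top_of_set Aset) U" using \<open>open Ob\<close> by (simp add: U_def openin_open_Int)
    define T where "T = (\<lambda>a. (UNIV :: 'n set, a)) ` U"
    have "T \<in> Abar_base" unfolding Abar_base_def T_def using U by (intro UnI1 CollectI exI[of _ U]) simp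
    then have "openin Abar_top T" by (rule Abar_base_open)
    moreover have "p \<in> T" using True pJ bA e by (auto simp: T_def U_def Ob_def)
    moreover have "\<forall>p'\<in>T. \<forall>i. \<bar>ncf q p' i - ncf q p i\<bar> < e"
      using True pJ by (auto simp: T_def U_def Ob_def ncf_UNIV)
    ultimately show ?thesis by blast
  next
    case False
    define Qr where "Qr = real q"
    have Qr: "Qr > 1" using Q by (simp add: Qr_def)
    define L where "L = Max ((\<lambda>j. b $ j) ` J) + \<bar>log Qr e\<bar> + 1"
    define z where "z = (\<chi> i. if i \<in> J then b $ i else L)"
    define u0 where "u0 = nrm UNIV z"
    have u0A: "u0 \<in> Aset" by (simp add: u0_def nrm_in_Aset)
    have diff: "u0 $ j - u0 $ i \<le> - \<bar>log Qr e\<bar> - 1" if "j \<in> J" "i \<notin> J" for i j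
    proof -
      have "b $ j \<le> Max ((\<lambda>j. b $ j) ` J)" using that by (intro Max_ge) auto
      then show ?thesis using that by (simp add: u0_def nrm_nth z_def L_def)
    qed
    define Ob where "Ob = {u. \<forall>j\<in>J. \<bar>hJ q J u j - hJ q J u0 j\<bar> < e} \<inter>
                        {u. \<forall>i\<in>-J. \<forall>j\<in>J. u $ j < u $ i} \<inter>
                        {u. \<forall>i\<in>-J. \<forall>j\<in>J. Qr powr (u $ j - u $ i) < e} \<inter> ball u0 1"
    have "open Ob" unfolding Ob_def Qr_def
      using Q J
      by (intro open_Int open_fin_all open_abs_less cont_hJ open_powr_less open_ball
          open_Collect_less continuous_intros) auto
    define U where "U = Aset \<inter> Ob"
    have U: "openin (top_of_set Aset) U" using \<open>open Ob\<close> by (simp add: U_def openin_open_Int)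
    have Ub: "bounded U" by (rule bounded_subset[of "ball u0 1"]) (auto simp: U_def Ob_def)
    define T where "T = Gamma J U"
    have "T \<in> Abar_base" unfolding Abar_base_def T_def using U Ub J False
      by (intro UnI2 CollectI exI[of _ J] exI[of _ U]) simp
    then have "openin Abar_top T" by (rule Abar_base_open)
    have u0O: "u0 \<in> Ob"
    proof -
      have "Qr powr (u0 $ j - u0 $ i) < e" if "j \<in> J" "i \<notin> J" for i j
      proof -
        have "Qr powr (u0 $ j - u0 $ i) \<le> Qr powr (- \<bar>log Qr e\<bar> - 1)"
          using diff[OF that] Qr by (intro powr_mono) auto
        also have "\<dots> < Qr powr (log Qr e)" using Qr by (intro powr_less_mono) auto
        also have "\<dots> = e" using Qr e by simp
        finally show ?thesis .
      qed
      moreover have "u0 $ j < u0 $ i" if "j \<in> J" "i \<notin> J" for i j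
        using diff[OF that] by linarith
      ultimately show ?thesis using e by (auto simp: Ob_def)
    qed
    have bu0: "nrm J u0 = b"
    proof -
      have "nrm J u0 = nrm J z" by (simp add: u0_def nrm_UNIV_nrm)
      also have "\<dots> = nrm J b" by (rule nrm_cong) (simp add: z_def)
      finally show ?thesis using b by simp
    qed
    have "u0 \<in> UDelta U J"
    proof -
      have "u0 = nrm UNIV (u0 + 0)" "u0 \<in> U" "(0::real^'n) \<in> Delta J"
        using Aset_nrm[OF u0A] u0A u0O by (auto simp: U_def Delta_def)
      then show ?thesis unfolding UDelta_def by blast
    qed
    then have "sJ J u0 \<in> T" unfolding T_def Gamma_def using False by blast
    moreover have "sJ J u0 = p" by (simp add: sJ_def bu0 pJ)
    ultimately have pT: "p \<in> T" by simp
    have ncfp: "ncf q p i = (if i \<in> J then hJ q J u0 i else 0)" for i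
      using ncf_nrm[OF J, of q u0] by (simp add: pJ bu0[symmetric] ncf_hJ)
    have close: "\<bar>ncf q p' i - ncf q p i\<bar> < e" if pT': "p' \<in> T" for p' i
    proof -
      obtain K u t where K: "J \<subseteq> K" "u \<in> U" "t \<in> Delta J" "p' = (K, nrm K (u + t))"
        using Gamma_cases[OF pT'[unfolded T_def] J] by blast
      have KN: "K \<noteq> {}" using K(1) J by auto
      have uO: "u \<in> Ob" using K(2) by (simp add: U_def)
      define y where "y = u + t"
      have t0: "t $ j = 0" if "j \<in> J" for j using K(3) that by (simp add: Delta_def)
      have tp: "t $ j \<ge> 0" if "j \<notin> J" for j using K(3) that by (simp add: Delta_def)
      obtain j0 where j0: "j0 \<in> J" "u $ j0 = Min ((\<lambda>k. u $ k) ` J)"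
        using Min_in[of "(\<lambda>k. u $ k) ` J"] J finite[of J] by (metis (no_types, lifting) finite_imageI imageE image_is_empty)
      have lt: "u $ j < u $ i" if "j \<in> J" "i \<notin> J" for i j using uO that by (auto simp: Ob_def)
      have pw: "Qr powr (u $ j - u $ i) < e" if "j \<in> J" "i \<notin> J" for i j using uO that by (auto simp: Ob_def)
      have minK: "Min ((\<lambda>k. y $ k) ` K) = u $ j0"
      proof (rule Min_eqI)
        show "finite ((\<lambda>k. y $ k) ` K)" by simp
        show "u $ j0 \<in> (\<lambda>k. y $ k) ` K" using j0 K(1) t0[OF j0(1)]
          by (auto simp: y_def image_iff intro!: bexI[of _ j0])
        fix x assume "x \<in> (\<lambda>k. y $ k) ` K"
        then obtain k where k: "k \<in> K" "x = y $ k" by blast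
        show "u $ j0 \<le> x"
        proof (cases "k \<in> J")
          case True
          then show ?thesis using k j0 t0[OF True] by (simp add: y_def)
        next
          case False
          then show ?thesis using k lt[OF j0(1) False] tp[OF False] by (simp add: y_def)
        qed
      qed
      have ncfp': "ncf q p' i = (if i \<in> K then Qr powr (u $ j0 - y $ i) else 0)"
        using ncf_nrm[OF KN, of q y] by (simp add: K(4) y_def[symmetric] ncf_def minK Qr_def)
      show ?thesis
      proof (cases "i \<in> J")
        case True
        have "ncf q p' i = hJ q J u i"
          using True K(1) t0[OF True] j0 by (auto simp: ncfp' hJ_def y_def Qr_def)
        then show ?thesis using uO True by (simp add: ncfp Ob_def)
      next
        case False
        show ?thesis
        proof (cases "i \<in> K")
          case True
          have "Qr powr (u $ j0 - y $ i) \<le> Qr powr (u $ j0 - u $ i)"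
            using tp[OF False] Qr by (intro powr_mono) (auto simp: y_def)
          also have "\<dots> < e" using pw[OF j0(1) False] .
          finally show ?thesis using False True by (simp add: ncfp ncfp')
        next
          case False
          then show ?thesis using \<open>i \<notin> J\<close> e by (simp add: ncfp ncfp')
        qed
      qed
    qed
    show ?thesis using \<open>openin Abar_top T\<close> pT close by blast
  qed
qed

lemma continuous_map_ncf:
  assumes "q > 1"
  shows "continuous_map (Abar_top :: ('n::finite set \<times> (real^'n)) topology) (top_of_set Cset) (ncf q)"
proof -
  have "continuous_map (Abar_top :: ('n::finite set \<times> (real^'n)) topology) euclideanreal (\<lambda>p. ncf q p i)" for i
  proof (rule cont_real_local)
    fix x :: "'n set \<times> (real^'n)" and e :: real
    assume "x \<in> topspace Abar_top" "e > 0"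
    then obtain T where "openin Abar_top T" "x \<in> T" "\<forall>p'\<in>T. \<forall>i. \<bar>ncf q p' i - ncf q x i\<bar> < e"
      using ncf_local[OF assms, of x e] by (auto simp: topspace_Abar_top)
    then show "\<exists>T. openin Abar_top T \<and> x \<in> T \<and> (\<forall>y\<in>T. \<bar>ncf q y i - ncf q x i\<bar> < e)" by blast
  qed
  then have "continuous_map (Abar_top :: ('n::finite set \<times> (real^'n)) topology)
      (product_topology (\<lambda>_. euclideanreal) UNIV) (ncf q)"
    unfolding continuous_map_componentwise_UNIV by blast
  then show ?thesis
    using ncf_Cset[OF _ assms]
    by (auto simp: continuous_map_in_subtopology euclidean_product_topology topspace_Abar_top)
qed



lemma lg_Gamma_char:
  assumes Q: "q > 1" and c: "(c :: 'n::finite \<Rightarrow> real) \<in> Cset" and I: "I \<noteq> {}"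
  shows "lg q c \<in> Gamma I U \<longleftrightarrow>
    (\<exists>u\<in>U. \<exists>k. (\<forall>i\<in>I. c i = real q powr (- (u $ i + k))) \<and> (\<forall>i\<in>-I. c i \<le> real q powr (- (u $ i + k))))"
proof
  have Qr: "real q > 1" using Q by simp
  assume "lg q c \<in> Gamma I U"
  then obtain K u t where K: "I \<subseteq> K" "u \<in> U" "t \<in> Delta I" "lg q c = (K, nrm K (u + t))"
    using Gamma_cases I by blast
  have sK: "supp c = K" and nK: "nrm K (\<chi> i. - log (real q) (c i)) = nrm K (u + t)"
    using K(4) by (auto simp: lg_def)
  define k where "k = avg K (\<chi> i. - log (real q) (c i)) - avg K (u + t)"
  have eq: "- log (real q) (c i) = u $ i + t $ i + k" if "i \<in> K" for i
    using nrm_eq_imp[OF nK] that by (simp add: k_def)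
  have cpos: "c i > 0" if "i \<in> K" for i using that c sK by (auto simp: supp_def Cset_def less_le)
  have cK: "c i = real q powr (- (u $ i + t $ i + k))" if "i \<in> K" for i
  proof -
    have "c i = real q powr (log (real q) (c i))" using cpos[OF that] Qr by simp
    also have "log (real q) (c i) = - (u $ i + t $ i + k)" using eq[OF that] by simp
    finally show ?thesis .
  qed
  have t0: "t $ i = 0" if "i \<in> I" for i using K(3) that by (simp add: Delta_def)
  have tp: "t $ i \<ge> 0" if "i \<notin> I" for i using K(3) that by (simp add: Delta_def)
  have "\<forall>i\<in>I. c i = real q powr (- (u $ i + k))" using cK t0 K(1) by auto
  moreover have "c i \<le> real q powr (- (u $ i + k))" if "i \<notin> I" for i
  proof (cases "i \<in> K")
    case True
    then show ?thesis using cK[OF True] tp[OF that] Qr by simp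
  next
    case False
    then have "c i = 0" using sK by (auto simp: supp_def)
    then show ?thesis by simp
  qed
  ultimately show "\<exists>u\<in>U. \<exists>k. (\<forall>i\<in>I. c i = real q powr (- (u $ i + k))) \<and> (\<forall>i\<in>-I. c i \<le> real q powr (- (u $ i + k)))"
    using K(2) by auto
next
  have Qr: "real q > 1" using Q by simp
  assume "\<exists>u\<in>U. \<exists>k. (\<forall>i\<in>I. c i = real q powr (- (u $ i + k))) \<and> (\<forall>i\<in>-I. c i \<le> real q powr (- (u $ i + k)))"
  then obtain u k where u: "u \<in> U" and onI: "\<forall>i\<in>I. c i = real q powr (- (u $ i + k))"
    and offI: "\<forall>i\<in>-I. c i \<le> real q powr (- (u $ i + k))" by blast
  define K where "K = supp c"
  have IK: "I \<subseteq> K" using onI Qr by (auto simp: K_def supp_def)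
  have cnn: "c i \<ge> 0" for i using c by (simp add: Cset_def)
  define t where "t = (\<chi> i. if i \<in> I then 0 else if c i \<noteq> 0 then - log (real q) (c i) - u $ i - k else 0)"
  have tD: "t \<in> Delta I"
  proof -
    have "- log (real q) (c i) - u $ i - k \<ge> 0" if "i \<notin> I" "c i \<noteq> 0" for i
    proof -
      have cp: "c i > 0" using cnn[of i] that by simp
      have "log (real q) (c i) \<le> log (real q) (real q powr (- (u $ i + k)))"
        using offI that cp Qr by (subst log_le_cancel_iff) auto
      then show ?thesis using Qr by simp
    qed
    then show ?thesis by (auto simp: Delta_def t_def)
  qed
  have keq: "\<forall>i\<in>K. (\<chi> i. - log (real q) (c i)) $ i = (u + t) $ i + k"
  proof
    fix i assume "i \<in> K"
    show "(\<chi> i. - log (real q) (c i)) $ i = (u + t) $ i + k"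
    proof (cases "i \<in> I")
      case True
      then show ?thesis using onI Qr by (simp add: t_def)
    next
      case False
      then show ?thesis using \<open>i \<in> K\<close> by (simp add: t_def K_def supp_def)
    qed
  qed
  have lgc: "lg q c = (K, nrm K (u + t))"
    using nrm_shift[OF keq] by (simp add: lg_def K_def)
  have UD: "nrm UNIV (u + t) \<in> UDelta U I" unfolding UDelta_def using u tD by blast
  show "lg q c \<in> Gamma I U"
  proof (cases "K = UNIV")
    case True
    then show ?thesis using lgc UD unfolding Gamma_def by auto
  next
    case False
    have "lg q c = sJ K (nrm UNIV (u + t))" using lgc by (simp add: sJ_def nrm_UNIV_nrm)
    then show ?thesis using UD IK False unfolding Gamma_def by blast
  qed
qed



lemma sum_if_UNIV:
  fixes a b :: real
  shows "(\<Sum>i\<in>(UNIV :: 'n::finite set). if i \<in> I then a else b) = real (card I) * a + real (card (- I)) * b"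
  by (simp add: sum.If_cases Compl_eq_Diff_UNIV)

lemma strictify:
  fixes I :: "'n::finite set"
  assumes Q: "q > 1" and Ob: "open Ob" and I: "I \<noteq> {}" and u: "u \<in> Aset \<inter> Ob"
    and onI: "\<forall>i\<in>I. c i = real q powr (- (u $ i + k))"
    and offI: "\<forall>i\<in>-I. c i \<le> real q powr (- (u $ i + k))"
  shows "\<exists>u'\<in>Aset \<inter> Ob. \<exists>k'. (\<forall>i\<in>I. c i = real q powr (- (u' $ i + k'))) \<and>
            (\<forall>i\<in>-I. c i < real q powr (- (u' $ i + k')))"
proof -
  have Qr: "real q > 1" using Q by simp
  obtain r where r: "r > 0" "ball u r \<subseteq> Ob" using Ob u openE by blast
  define m where "m = real (card (- I))"
  define n1 where "n1 = real (card I)"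
  have n1: "n1 > 0" using I by (simp add: n1_def card_gt_0_iff)
  have m: "m \<ge> 0" by (simp add: m_def)
  define dv :: "real^'n" where "dv = (\<chi> i. if i \<in> I then m / n1 else -1)"
  define s where "s = r / (norm dv + 1)"
  have s: "s > 0" using r by (simp add: s_def add_nonneg_pos)
  have sd: "s * norm dv < r"
  proof -
    have "s * norm dv = r * (norm dv / (norm dv + 1))" by (simp add: s_def)
    also have "\<dots> < r * 1"
    proof (intro mult_strict_left_mono)
      have h: "0 < norm dv + 1" by (simp add: add_nonneg_pos)
      show "norm dv / (norm dv + 1) < 1" using h by (simp add: divide_less_eq)
    qed (use r in auto)
    finally show ?thesis by simp
  qed
  define u' where "u' = u + s *\<^sub>R dv"
  define k' where "k' = k - s * m / n1"
  have "dist u u' < r" using sd s by (simp add: u'_def dist_norm)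
  then have u'O: "u' \<in> Ob" using r by auto
  have "(\<Sum>i\<in>UNIV. dv $ i) = n1 * (m / n1) + m * (-1)"
    unfolding dv_def using sum_if_UNIV[of I "m / n1" "-1"] by (simp add: m_def n1_def)
  also have "\<dots> = 0" using n1 by simp
  finally have sdv: "(\<Sum>i\<in>UNIV. dv $ i) = 0" .
  have "(\<Sum>i\<in>UNIV. u' $ i) = (\<Sum>i\<in>UNIV. u $ i) + s * (\<Sum>i\<in>UNIV. dv $ i)"
    by (simp add: u'_def sum.distrib sum_distrib_left)
  then have u'A: "u' \<in> Aset" using u sdv by (simp add: Aset_def)
  have eqI: "u' $ i + k' = u $ i + k" if "i \<in> I" for i
    using that by (simp add: u'_def k'_def dv_def)
  have ltI: "u' $ i + k' < u $ i + k" if "i \<notin> I" for i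
  proof -
    have "s * m / n1 \<ge> 0" using s m n1 by simp
    then show ?thesis using that s by (simp add: u'_def k'_def dv_def)
  qed
  have "\<forall>i\<in>I. c i = real q powr (- (u' $ i + k'))" using onI eqI by simp
  moreover have "\<forall>i\<in>-I. c i < real q powr (- (u' $ i + k'))"
  proof
    fix i assume "i \<in> -I"
    then have "c i \<le> real q powr (- (u $ i + k))" using offI by blast
    also have "\<dots> < real q powr (- (u' $ i + k'))"
      using ltI[of i] \<open>i \<in> -I\<close> Qr by (intro powr_less_mono) auto
    finally show "c i < real q powr (- (u' $ i + k'))" .
  qed
  ultimately show ?thesis using u'A u'O by blast
qed



lemma open_PosI: "open {c :: 'n::finite \<Rightarrow> real. \<forall>i\<in>I. c i > 0}"
  by (intro open_fin_all open_Collect_less continuous_intros) auto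

lemma lg_open_Gamma:
  fixes I :: "'n::finite set"
  assumes Q: "q > 1" and I: "I \<noteq> {}" and U: "openin (top_of_set Aset) U"
  shows "openin (top_of_set Cset) {c \<in> Cset. lg q c \<in> Gamma I U}"
proof -
  have Qr: "real q > 1" using Q by simp
  obtain Ob where Ob: "open Ob" "U = Aset \<inter> Ob" using U by (auto simp: openin_open)
  define Kf where "Kf = (\<lambda>(w::real^'n) (c::'n \<Rightarrow> real).
     ((\<Sum>i\<in>I. - log (real q) (c i)) + (\<Sum>i\<in>-I. w $ i)) / real (card I))"
  define Ff where "Ff = (\<lambda>(w::real^'n) (c::'n \<Rightarrow> real).
     (\<chi> i. if i \<in> I then - log (real q) (c i) - Kf w c else w $ i))"
  define PosI where "PosI = {c :: 'n \<Rightarrow> real. \<forall>i\<in>I. c i > 0}"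
  define Ow where "Ow = (\<lambda>w. PosI \<inter> Ff w -` Ob \<inter>
      (\<Inter>i\<in>-I. PosI \<inter> (\<lambda>c. c i - real q powr (- (w $ i + Kf w c))) -` {..<0}))"
  have oP: "open PosI" unfolding PosI_def by (rule open_PosI)
  have cK: "continuous_on PosI (Kf w)" for w
    unfolding Kf_def using Qr I
    by (auto simp: PosI_def intro!: continuous_intros continuous_on_subset[OF continuous_on_product_coordinates])
  have cF: "continuous_on PosI (Ff w)" for w
    unfolding Ff_def
  proof (intro continuous_on_vec_lambda)
    fix i
    show "continuous_on PosI (\<lambda>c. if i \<in> I then - log (real q) (c i) - Kf w c else w $ i)"
    proof (cases "i \<in> I")
      case True
      have "continuous_on PosI (\<lambda>c. - log (real q) (c i))" using Qr True
        by (auto simp: PosI_def intro!: continuous_intros continuous_on_subset[OF continuous_on_product_coordinates])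
      then show ?thesis using True by (simp add: continuous_on_diff cK)
    qed simp
  qed
  have oOw: "open (Ow w)" for w
  proof -
    have "continuous_on PosI (\<lambda>c. c i - real q powr (- (w $ i + Kf w c)))" for i
      using Qr by (intro continuous_intros cK continuous_on_subset[OF continuous_on_product_coordinates]) auto
    then have 2: "\<forall>i\<in>-I. open (PosI \<inter> (\<lambda>c. c i - real q powr (- (w $ i + Kf w c))) -` {..<0})"
      using oP by (auto intro!: continuous_open_preimage)
    have 1: "open (PosI \<inter> Ff w -` Ob)" by (rule continuous_open_preimage[OF cF oP Ob(1)])
    show ?thesis unfolding Ow_def by (rule open_Int[OF 1 open_INT[OF _ 2]]) simp
  qed
  define W where "W = (\<Union>w. Ow w)"
  have "open W" unfolding W_def using oOw by auto
  have "{c \<in> Cset. lg q c \<in> Gamma I U} = Cset \<inter> W"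
  proof (intro set_eqI iffI)
    fix c assume "c \<in> {c \<in> Cset. lg q c \<in> Gamma I U}"
    then have c: "c \<in> Cset" and "lg q c \<in> Gamma I U" by auto
    then obtain u k where u: "u \<in> U" and onI: "\<forall>i\<in>I. c i = real q powr (- (u $ i + k))"
      and offI: "\<forall>i\<in>-I. c i \<le> real q powr (- (u $ i + k))"
      using lg_Gamma_char[OF Q c I] by blast
    obtain u' k' where u': "u' \<in> Aset \<inter> Ob" and onI': "\<forall>i\<in>I. c i = real q powr (- (u' $ i + k'))"
      and offI': "\<forall>i\<in>-I. c i < real q powr (- (u' $ i + k'))"
      using strictify[OF Q Ob(1) I _ onI offI] u Ob(2) by blast
    have cpos: "c \<in> PosI" using onI' Q by (simp add: PosI_def)
    have logc: "- log (real q) (c i) = u' $ i + k'" if "i \<in> I" for i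
      using onI' that Qr by simp
    have "(\<Sum>i\<in>I. - log (real q) (c i)) = (\<Sum>i\<in>I. u' $ i) + real (card I) * k'"
      using logc by (simp add: sum.distrib)
    moreover have "(\<Sum>i\<in>I. u' $ i) + (\<Sum>i\<in>-I. u' $ i) = 0"
      using u' sum.union_disjoint[of I "-I" "\<lambda>i. u' $ i"] by (simp add: Aset_def)
    moreover have "real (card I) > 0" using I by (simp add: card_gt_0_iff)
    ultimately have num: "(\<Sum>i\<in>I. - log (real q) (c i)) + (\<Sum>i\<in>-I. u' $ i) = real (card I) * k'"
      and cI: "real (card I) > 0" by linarith+
    have Kc: "Kf u' c = k'" unfolding Kf_def
      using num cI I by simp
    have Fc: "Ff u' c = u'" using logc by (simp add: Ff_def Kc vec_eq_iff)
    have "c \<in> Ow u'" unfolding Ow_def using cpos Fc u' offI' Kc by auto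
    then show "c \<in> Cset \<inter> W" using c by (auto simp: W_def)
  next
    fix c assume "c \<in> Cset \<inter> W"
    then obtain w where c: "c \<in> Cset" and cO: "c \<in> Ow w" by (auto simp: W_def)
    have cpos: "\<forall>i\<in>I. c i > 0" using cO by (simp add: Ow_def PosI_def)
    have FO: "Ff w c \<in> Ob" using cO by (simp add: Ow_def)
    have cO3: "c \<in> (\<Inter>i\<in>-I. PosI \<inter> (\<lambda>c. c i - real q powr (- (w $ i + Kf w c))) -` {..<0})"
      using cO unfolding Ow_def by blast
    have lt: "\<forall>i\<in>-I. c i < real q powr (- (w $ i + Kf w c))"
    proof
      fix i assume "i \<in> -I"
      then have "c \<in> PosI \<inter> (\<lambda>c. c i - real q powr (- (w $ i + Kf w c))) -` {..<0}"
        using cO3 by blast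
      then show "c i < real q powr (- (w $ i + Kf w c))" by simp
    qed
    have "(\<Sum>i\<in>UNIV. Ff w c $ i) = (\<Sum>i\<in>I. Ff w c $ i) + (\<Sum>i\<in>-I. Ff w c $ i)"
      using sum.union_disjoint[of I "-I" "\<lambda>i. Ff w c $ i"] by (simp add: Un_commute)
    also have "(\<Sum>i\<in>I. Ff w c $ i) = (\<Sum>i\<in>I. - log (real q) (c i)) - real (card I) * Kf w c"
      by (simp add: Ff_def sum_subtractf)
    also have "(\<Sum>i\<in>-I. Ff w c $ i) = (\<Sum>i\<in>-I. w $ i)"
      by (simp add: Ff_def)
    also have "real (card I) * Kf w c = (\<Sum>i\<in>I. - log (real q) (c i)) + (\<Sum>i\<in>-I. w $ i)"
      using I by (simp add: Kf_def card_gt_0_iff)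
    finally have "Ff w c \<in> Aset" by (simp add: Aset_def)
    then have FU: "Ff w c \<in> U" using FO Ob(2) by simp
    have "\<forall>i\<in>I. c i = real q powr (- (Ff w c $ i + Kf w c))"
    proof
      fix i assume "i \<in> I"
      then have "- (Ff w c $ i + Kf w c) = log (real q) (c i)" by (simp add: Ff_def)
      then show "c i = real q powr (- (Ff w c $ i + Kf w c))" using cpos \<open>i \<in> I\<close> Qr by simp
    qed
    moreover have "\<forall>i\<in>-I. c i \<le> real q powr (- (Ff w c $ i + Kf w c))"
      using lt by (auto simp: Ff_def less_imp_le)
    ultimately have "lg q c \<in> Gamma I U"
      using lg_Gamma_char[OF Q c I] FU by blast
    then show "c \<in> {c \<in> Cset. lg q c \<in> Gamma I U}" using c by simp
  qed
  then show ?thesis using \<open>open W\<close> by (auto simp: openin_open)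
qed



lemma lg_open_UNIV:
  assumes Q: "q > 1" and U: "openin (top_of_set Aset) U"
  shows "openin (top_of_set Cset) {c \<in> (Cset :: ('n::finite \<Rightarrow> real) set). lg q c \<in> (\<lambda>a. (UNIV :: 'n set, a)) ` U}"
proof -
  have Qr: "real q > 1" using Q by simp
  obtain Ob where Ob: "open Ob" "U = Aset \<inter> Ob" using U by (auto simp: openin_open)
  define Pos where "Pos = {c :: 'n \<Rightarrow> real. \<forall>i\<in>UNIV. c i > 0}"
  define F where "F = (\<lambda>c :: 'n \<Rightarrow> real. nrm UNIV (\<chi> i. - log (real q) (c i)))"
  have F': "F = (\<lambda>c. \<chi> i. - log (real q) (c i) - (\<Sum>j\<in>UNIV. - log (real q) (c j)) / real CARD('n))"
    by (simp add: F_def nrm_def fun_eq_iff)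
  have oP: "open Pos" unfolding Pos_def by (rule open_PosI)
  have cF: "continuous_on Pos F" unfolding F' using Qr
    by (auto simp: Pos_def intro!: continuous_intros continuous_on_subset[OF continuous_on_product_coordinates])
      (metis less_irrefl)+
  have "{c \<in> Cset. lg q c \<in> (\<lambda>a. (UNIV :: 'n set, a)) ` U} = Cset \<inter> (Pos \<inter> F -` Ob)"
  proof (intro set_eqI iffI)
    fix c assume "c \<in> {c \<in> Cset. lg q c \<in> (\<lambda>a. (UNIV :: 'n set, a)) ` U}"
    then have c: "c \<in> Cset" and "supp c = UNIV" "F c \<in> U" by (auto simp: lg_def F_def)
    then have "c \<in> Pos" by (auto simp: Pos_def supp_def Cset_def less_le)
    then show "c \<in> Cset \<inter> (Pos \<inter> F -` Ob)" using c \<open>F c \<in> U\<close> Ob(2) by auto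
  next
    fix c assume c: "c \<in> Cset \<inter> (Pos \<inter> F -` Ob)"
    then have "supp c = UNIV" by (auto simp: Pos_def supp_def) (metis less_irrefl)
    moreover have "F c \<in> U" using c Ob(2) by (simp add: F_def nrm_in_Aset)
    ultimately show "c \<in> {c \<in> Cset. lg q c \<in> (\<lambda>a. (UNIV :: 'n set, a)) ` U}"
      using c by (auto simp: lg_def F_def)
  qed
  then show ?thesis using continuous_open_preimage[OF cF oP Ob(1)] by (auto simp: openin_open)
qed

lemma continuous_map_lg:
  assumes Q: "q > 1"
  shows "continuous_map (top_of_set (Cset :: ('n::finite \<Rightarrow> real) set)) Abar_top (lg q)"
  unfolding Abar_top_def
proof (rule continuous_on_generated_topo)
  fix B assume "B \<in> (Abar_base :: ('n set \<times> (real^'n)) set set)"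
  then consider (A) U where "B = (\<lambda>a. (UNIV, a)) ` U" "openin (top_of_set Aset) U"
    | (G) I U where "B = Gamma I U" "I \<noteq> {}" "openin (top_of_set Aset) U"
    unfolding Abar_base_def by blast
  then have "openin (top_of_set Cset) {c \<in> Cset. lg q c \<in> B}"
  proof cases
    case A then show ?thesis using lg_open_UNIV[OF Q A(2)] by simp
  next
    case G then show ?thesis using lg_open_Gamma[OF Q G(2) G(3)] by simp
  qed
  moreover have "lg q -` B \<inter> topspace (top_of_set Cset) = {c \<in> Cset. lg q c \<in> B}" by auto
  ultimately show "openin (top_of_set Cset) (lg q -` B \<inter> topspace (top_of_set Cset))" by simp
next
  have "\<Union>(Abar_base :: ('n set \<times> (real^'n)) set set) = Abar"
    using topspace_Abar_top unfolding Abar_top_def topology_generated_by_topspace .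
  then show "lg q ` topspace (top_of_set Cset) \<subseteq> \<Union>(Abar_base :: ('n set \<times> (real^'n)) set set)"
    using lg_Abar by auto
qed

lemma homeo_part:
  fixes v :: "'k::field \<Rightarrow> int"
  assumes nlf: "nonarch_local_field v q"
  shows "homeomorphic_map (Abar_top :: ('n::finite set \<times> (real^'n)) topology) (Sc_top v q) (phi v q)"
proof -
  have Q: "q > 1" using q_gt1[OF nlf] by simp
  have c1: "continuous_map (Abar_top :: ('n set \<times> (real^'n)) topology) (Sc_top v q) (sclass v q \<circ> gam v q \<circ> ncf q)"
    unfolding Sc_top_def
    by (intro continuous_map_compose[OF continuous_map_ncf[OF Q]]
        continuous_map_compose[OF continuous_map_gam[OF nlf]] continuous_map_quotient)
  have cphi: "continuous_map (Abar_top :: ('n set \<times> (real^'n)) topology) (Sc_top v q) (phi v q)"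
    by (rule continuous_map_eq[OF c1]) (simp add: topspace_Abar_top phi_eq[OF nlf])
  have c2: "continuous_map (Sc'_top v q) (Abar_top :: ('n set \<times> (real^'n)) topology) (lg q \<circ> coef)"
    by (rule continuous_map_compose[OF continuous_map_coef continuous_map_lg[OF Q]])
  have c3: "continuous_map (Sc'_top v q) (Abar_top :: ('n set \<times> (real^'n)) topology) (psi v q \<circ> sclass v q)"
    by (rule continuous_map_eq[OF c2]) (simp add: topspace_Sc'_top psi_sclass[OF nlf])
  have cpsi: "continuous_map (Sc_top v q) (Abar_top :: ('n set \<times> (real^'n)) topology) (psi v q)"
    unfolding Sc_top_def by (rule continuous_map_from_quotient[OF c3])
  have "homeomorphic_maps (Abar_top :: ('n set \<times> (real^'n)) topology) (Sc_top v q) (phi v q) (psi v q)"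
    unfolding homeomorphic_maps_def
    using cphi cpsi psi_phi[OF nlf] phi_psi[OF nlf]
    by (auto simp: topspace_Abar_top topspace_Sc_top)
  then show ?thesis using homeomorphic_map_maps by blast
qed



lemma MaxI_gam:
  fixes f :: "'n::finite \<Rightarrow> real"
  assumes "I \<noteq> {}" "\<And>i. i \<in> I \<Longrightarrow> f i > 0"
  shows "(\<lambda>x. Max ((\<lambda>i. absv v q (x i) * f i) ` I)) = gam v q (\<lambda>i. if i \<in> I then f i else 0)"
    and "(\<lambda>i. if i \<in> I then f i else 0) \<in> Cset"
proof -
  show "(\<lambda>x. Max ((\<lambda>i. absv v q (x i) * f i) ` I)) = gam v q (\<lambda>i. if i \<in> I then f i else 0)"
  proof
    fix x :: "'n \<Rightarrow> 'a"
    have "gam v q (\<lambda>i. if i \<in> I then f i else 0) x = Max ((\<lambda>i. if i \<in> I then absv v q (x i) * f i else 0) ` UNIV)"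
      unfolding gam_def by (intro arg_cong[where f = Max] image_cong) auto
    also have "\<dots> = Max ((\<lambda>i. absv v q (x i) * f i) ` I)"
      using Max_UNIV_if[OF assms(1), of "\<lambda>i. if i \<in> I then absv v q (x i) * f i else 0"] assms(2)
      by (smt (verit, best) Max_UNIV_if absv_nonneg assms(1) image_cong less_imp_le mult_nonneg_nonneg)
    finally show "Max ((\<lambda>i. absv v q (x i) * f i) ` I) = gam v q (\<lambda>i. if i \<in> I then f i else 0) x" by simp
  qed
  obtain i0 where i0: "i0 \<in> I" using assms(1) by blast
  have "\<forall>i. (if i \<in> I then f i else 0) \<ge> 0" using assms(2) by (auto simp: less_imp_le)
  moreover have "(if i0 \<in> I then f i0 else 0) \<noteq> 0" using assms(2)[OF i0] i0 by simp
  ultimately show "(\<lambda>i. if i \<in> I then f i else 0) \<in> Cset" unfolding Cset_def by blast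
qed

lemma N_act_sclass:
  assumes nlf: "nonarch_local_field v q" and g: "\<gamma> \<in> Sc' v q" and g2: "\<gamma> \<circ> ninv d w \<in> Sc' v q"
  shows "N_act_Sc d w (sclass v q \<gamma>) = sclass v q (\<gamma> \<circ> ninv d w)"
proof (intro set_eqI iffI)
  fix h assume "h \<in> N_act_Sc d w (sclass v q \<gamma>)"
  then obtain g' where g': "g' \<in> sclass v q \<gamma>" "h = g' \<circ> ninv d w" by (auto simp: N_act_Sc_def)
  then obtain r where r: "r > 0" "g' = (\<lambda>x. r * \<gamma> x)" using sclass_mem by blast
  have "h = (\<lambda>x. r * (\<gamma> \<circ> ninv d w) x)" using g' r by (auto simp: o_def)
  moreover have "(\<lambda>x. r * (\<gamma> \<circ> ninv d w) x) \<in> Sc' v q" by (rule Sc'_scale[OF nlf g2 r(1)])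
  ultimately show "h \<in> sclass v q (\<gamma> \<circ> ninv d w)" using r(1) unfolding sclass_def by blast
next
  fix h assume "h \<in> sclass v q (\<gamma> \<circ> ninv d w)"
  then obtain r where r: "r > 0" "h = (\<lambda>x. r * (\<gamma> \<circ> ninv d w) x)" using sclass_mem by blast
  have "(\<lambda>x. r * \<gamma> x) \<in> sclass v q \<gamma>"
    using Sc'_scale[OF nlf g r(1)] r(1) unfolding sclass_def by blast
  moreover have "h = (\<lambda>x. r * \<gamma> x) \<circ> ninv d w" using r by (auto simp: o_def)
  ultimately show "h \<in> N_act_Sc d w (sclass v q \<gamma>)" by (auto simp: N_act_Sc_def)
qed

lemma equivariance:
  fixes v :: "'k::field \<Rightarrow> int"
  assumes nlf: "nonarch_local_field v q" and d: "\<forall>i. d i \<noteq> 0" and w: "w permutes (UNIV :: 'n::finite set)"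
    and x: "(x :: 'n set \<times> (real^'n)) \<in> Abar"
  shows "phi v q (N_act_Abar v d w x) = N_act_Sc d w (phi v q x)"
proof -
  have Qr: "real q > 1" using q_gt1[OF nlf] .
  obtain I a where xI: "x = (I, a)" by (cases x)
  have I: "I \<noteq> {}" using x xI by (simp add: Abar_iff)
  have wI: "w ` I \<noteq> {}" using I by simp
  have winv: "inv w (w i) = i" for i using w by (simp add: permutes_inverses(2))
  define z1 where "z1 = (\<chi> j. a $ (inv w j))"
  define a1 where "a1 = nrm (w ` I) z1"
  define z2 where "z2 = (\<chi> i. a1 $ i - real_of_int (v (d i)))"
  define a2 where "a2 = nrm (w ` I) z2"
  define c where "c = avg (w ` I) z1 + avg (w ` I) z2"
  have NA: "N_act_Abar v d w x = (w ` I, a2)"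
    by (simp add: N_act_Abar_def T_act_def W_act_def xI a2_def z2_def a1_def z1_def)
  have a2i: "- (a2 $ i) = c + (real_of_int (v (d i)) - a $ (inv w i))" if "i \<in> w ` I" for i
    using that by (simp add: a2_def z2_def a1_def z1_def nrm_nth c_def)
  define f3 where "f3 = (\<lambda>i. real q powr (real_of_int (v (d i)) - a $ (inv w i)))"
  define g3 where "g3 = (\<lambda>y. Max ((\<lambda>i. absv v q (y i) * f3 i) ` (w ` I)))"
  define g0 where "g0 = (\<lambda>y. Max ((\<lambda>i. absv v q (y i) * real q powr (- (a $ i))) ` I))"
  have g3S: "g3 \<in> Sc' v q"
    using MaxI_gam(1)[OF wI, of f3 v q] MaxI_gam(2)[OF wI, of f3] gam_in_Sc'[OF nlf] Qr unfolding g3_def f3_def by auto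
  have g0S: "g0 \<in> Sc' v q"
    using MaxI_gam(1)[OF I, of "\<lambda>i. real q powr (- (a $ i))" v q] MaxI_gam(2)[OF I, of "\<lambda>i. real q powr (- (a $ i))"]
      gam_in_Sc'[OF nlf] Qr unfolding g0_def by auto
  have g3eq: "g3 = g0 \<circ> ninv d w"
  proof
    fix y :: "'n \<Rightarrow> 'k"
    have "(g0 \<circ> ninv d w) y = Max ((\<lambda>i. absv v q (y (w i)) * f3 (w i)) ` I)"
      unfolding g0_def o_def ninv_def f3_def
      using d Qr by (intro arg_cong[where f = Max] image_cong)
        (auto simp: absv_div[OF nlf] winv powr_add[symmetric] mult.assoc)
    also have "\<dots> = g3 y" unfolding g3_def by (simp add: image_image)
    finally show "g3 y = (g0 \<circ> ninv d w) y" by simp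
  qed
  have "phi v q (N_act_Abar v d w x) = sclass v q (\<lambda>y. Max ((\<lambda>i. absv v q (y i) * real q powr (- (a2 $ i))) ` (w ` I)))"
    by (simp add: NA phi_def)
  also have "(\<lambda>y. Max ((\<lambda>i. absv v q (y i) * real q powr (- (a2 $ i))) ` (w ` I))) = (\<lambda>y. real q powr c * g3 y)"
  proof
    fix y :: "'n \<Rightarrow> 'k"
    have "Max ((\<lambda>i. absv v q (y i) * real q powr (- (a2 $ i))) ` (w ` I)) =
          Max ((\<lambda>i. real q powr c * (absv v q (y i) * f3 i)) ` (w ` I))"
      using a2i by (intro arg_cong[where f = Max] image_cong) (auto simp: f3_def powr_add mult_ac)
    also have "\<dots> = real q powr c * g3 y" unfolding g3_def using wI by (intro Max_scale) auto
    finally show "Max ((\<lambda>i. absv v q (y i) * real q powr (- (a2 $ i))) ` (w ` I)) = real q powr c * g3 y" .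
  qed
  also have "sclass v q (\<lambda>y. real q powr c * g3 y) = sclass v q g3"
    using Qr by (intro sclass_scale[OF nlf g3S]) auto
  also have "\<dots> = N_act_Sc d w (sclass v q g0)"
    using N_act_sclass[OF nlf g0S, of d w] g3eq g3S by simp
  also have "sclass v q g0 = phi v q x" by (simp add: phi_def xI g0_def)
  finally show ?thesis .
qed


theorem proposition3p2:
  fixes v :: "'k::field \<Rightarrow> int" and q :: nat
  assumes "nonarch_local_field v q"
  shows "homeomorphic_map (Abar_top :: ('n::finite set \<times> (real^'n)) topology)
            (Sc_top v q) (phi v q)
       \<and> (\<forall>d w (x :: 'n set \<times> (real^'n)). (\<forall>i. d i \<noteq> 0) \<longrightarrow> w permutes UNIV \<longrightarrow> x \<in> Abar \<longrightarrow>
            phi v q (N_act_Abar v d w x) = N_act_Sc d w (phi v q x))"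
  using homeo_part[OF assms] equivariance[OF assms] by blast

end
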